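(* Let $\Omega\subset\mathbb{R}^2$ be a bounded domain, $X\subset\overline{\Omega}$ finite with $X\setminus\partial\Omega\subset\mathrm{int}(\mathrm{conv}(X\cap\partial\Omega))$, $f_X$ a discrete load on $X$, $E_0,V_0>0$, and assume $\mathcal{Z}_X>0$. Let $(\mathbf{s},\mathbf{q},\mathbf{r})\in\mathbb{R}^{3\times m}$ solve $(\mathcal{P}_X)$ and $(\mathbf{u}_1,\mathbf{u}_2,\mathbf{w})\in\mathbb{R}^{3\times n}$ (with some slack vectors) solve $(\mathcal{P}_X^* )$. Then the pair $$\mathbf{z}=\tfrac12\mathbf{w},\qquad\mathbf{a}=\frac{V_0}{\mathcal{Z}_X}\mathbf{J}(\mathbf{z})\mathbf{s}$$ solves $(\mathrm{MCGS}_X)$ with $\mathcal{C}_{X,\min}=\frac{(\mathcal{Z}_X)^2}{2E_0V_0}$. Moreover, the vectors $$(\mathbf{u}_{1,el},\mathbf{u}_{2,el},\mathbf{w}_{el})=\frac{\mathcal{Z}_X}{E_0V_0}(\mathbf{u}_1,\mathbf{u}_2,\mathbf{w}),\qquad\hat{\mathbf{s}}=\mathbf{J}(\mathbf{z})\mathbf{s}$$ solve, respectively, the displacement-based problem defining $\mathcal{C}_X(\mathbf{z},\mathbf{a})$ and the stress-based problem for $(\mathbf{z},\mathbf{a})$. Each bar with $a_k\ne0$ undergoes the strain $\hat{\mathrm{e}}_k(\mathbf{u}_{1,el},\mathbf{u}_{2,el},\mathbf{w}_{el};\mathbf{z})=\mathcal{Z}_X/(E_0V_0)$, and for every bar $k$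 Hooke's law holds: $\hat s_k=(E_0a_k)\,\hat{\mathrm{e}}_k(\mathbf{u}_{1,el},\mathbf{u}_{2,el},\mathbf{w}_{el};\mathbf{z})$.
   Context: Discrete setting: $\bar n=\#X$, $n=\#(X\setminus\partial\Omega)$, enumeration $\chi:\{1,\dots,n\}\to X\setminus\partial\Omega$; $m=\bar n(\bar n-1)/2$, enumeration $k\mapsto\{\chi_-(k),\chi_+(k)\}$ of unordered pairs of distinct points of $X$. $f_i=f_X(\{\chi(i)\})$, $l_k=|\chi_+(k)-\chi_-(k)|$. Vectors in $\mathbb{R}^n$ are identified with functions on $X$ vanishing on $X\cap\partial\Omega$. $(\mathbf{B}_1\mathbf{u}_1+\mathbf{B}_2\mathbf{u}_2)_k=(u(\chi_+(k))-u(\chi_-(k)))\cdot(\chi_+(k)-\chi_-(k))/l_k$, $(\mathbf{D}\mathbf{w})_k=w(\chi_+(k))-w(\chi_-(k))$. $\mathrm{K}=\{(t_1,t_2,t_3):t_1,t_2\ge0,2t_1t_2\ge t_3^2\}$. $(\mathcal{P}_X)$: $\inf\{\mathbf{l}^\top\mathbf{s}+2\mathbf{l}^\top\mathbf{r}:\mathbf{s},\mathbf{r}\in\mathbb{R}^m_+,\mathbf{q}\in\mathbb{R}^m,\mathbf{B}_1^\top\mathbf{s}=\mathbf{B}_2^\top\mathbf{s}=\mathbf{0},\mathbf{D}^\top\mathbf{q}=\mathbf{f},(r_k,s_k,q_k)\in\mathrm{K}\ \forall k\}$; $(\mathcal{P}_X^* )$: $\sup\{\mathbf{f}^\top\mathbf{w}:\mathbf{t}_2+\mathbf{B}_1\mathbf{u}_1+\mathbf{B}_2\mathbf{u}_2=\mathbf{l},\mathbf{t}_3+\mathbf{D}\mathbf{w}=\mathbf{0},\mathbf{t}_1=2\mathbf{l},(t_{1;k},t_{2;k},t_{3;k})\in\mathrm{K}\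 \forall k\}$ over $\mathbf{u}_1,\mathbf{u}_2,\mathbf{w}\in\mathbb{R}^n$, $\mathbf{t}_1,\mathbf{t}_2\in\mathbb{R}^m_+$, $\mathbf{t}_3\in\mathbb{R}^m$; it is known $\min\mathcal{P}_X=\max\mathcal{P}_X^*=:\mathcal{Z}_X$. For $\mathbf{z}\in\mathbb{R}^n$: $\Delta_k(\mathbf{z})=(\mathbf{D}\mathbf{z})_k/l_k$, $\mathbf{J}(\mathbf{z})$ diagonal with $J_{kk}(\mathbf{z})=\sqrt{1+\Delta_k(\mathbf{z})^2}$, $\hat l_k(\mathbf{z})=J_{kk}(\mathbf{z})l_k$; $\mathrm{e}_k(\mathbf{u}_1,\mathbf{u}_2)=(\mathbf{B}_1\mathbf{u}_1+\mathbf{B}_2\mathbf{u}_2)_k/l_k$; $\hat{\mathrm{e}}_k(\mathbf{u}_1,\mathbf{u}_2,\mathbf{w};\mathbf{z})=(\mathrm{e}_k(\mathbf{u}_1,\mathbf{u}_2)+\Delta_k(\mathbf{z})\Delta_k(\mathbf{w}))/(1+\Delta_k(\mathbf{z})^2)$. Displacement-based compliance: $\mathcal{C}_X(\mathbf{z},\mathbf{a})=\sup_{\mathbf{u}_1,\mathbf{u}_2,\mathbf{w}}\{\mathbf{f}^\top\mathbf{w}-\frac{E_0}{2}\sum_k((\hat{\mathrm{e}}_k)_+)^2a_k\hat l_k(\mathbf{z})\}$. Stress-based problem: $\inf\{\frac{1}{2E_0}\sum_k\frac{\hat s_k^2}{a_k}\hat l_k(\mathbf{z}):\hat{\mathbf{s}}\in\mathbb{R}^m_+,\mathbf{B}_1^\top\mathbf{s}=\mathbf{B}_2^\top\mathbf{s}=\mathbf{0},\mathbf{D}^\top\mathbf{q}=\mathbf{f},s_k=\hat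 s_k/J_{kk}(\mathbf{z}),q_k=\Delta_k(\mathbf{z})\hat s_k/J_{kk}(\mathbf{z})\}$ (convention $0/0=0$, $c/0=+\infty$ for $c>0$), known to equal $\mathcal{C}_X(\mathbf{z},\mathbf{a})$. $(\mathrm{MCGS}_X)$: $\mathcal{C}_{X,\min}=\inf\{\mathcal{C}_X(\mathbf{z},\mathbf{a}):\mathbf{z}\in\mathbb{R}^n,\mathbf{a}\in\mathbb{R}^m_+,\sum_ka_k\hat l_k(\mathbf{z})\le V_0\}$. *)

theory Defs
  imports "HOL-Analysis.Analysis" "HOL-Library.Extended_Real"
begin

(* Points of the plane: real^2.
   Node vectors (elements of R^n) are identified with functions real^2 => real
   vanishing outside the set N = X - frontier Omega of free nodes.
   Bars: index k < m, endpoints cm k (= chi_-(k)) and cp k (= chi_+(k));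
   bar vectors (elements of R^m) are functions nat => real, only k < m matters. *)

definition nodevec :: "(real^2) set \<Rightarrow> (real^2 \<Rightarrow> real) \<Rightarrow> bool" where
  "nodevec N v \<longleftrightarrow> (\<forall>x. x \<notin> N \<longrightarrow> v x = 0)"

definition barlen :: "(nat \<Rightarrow> real^2) \<Rightarrow> (nat \<Rightarrow> real^2) \<Rightarrow> nat \<Rightarrow> real" where
  "barlen cm cp k = norm (cp k - cm k)"

definition inK :: "real \<Rightarrow> real \<Rightarrow> real \<Rightarrow> bool" where
  "inK t1 t2 t3 \<longleftrightarrow> t1 \<ge> 0 \<and> t2 \<ge> 0 \<and> 2 * t1 * t2 \<ge> t3 ^ 2"

definition B1 :: "(nat \<Rightarrow> real^2) \<Rightarrow> (nat \<Rightarrow> real^2) \<Rightarrow> (real^2 \<Rightarrow> real) \<Rightarrow> nat \<Rightarrow> real" where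
  "B1 cm cp u k = (u (cp k) - u (cm k)) * (cp k - cm k) $ 1 / barlen cm cp k"

definition B2 :: "(nat \<Rightarrow> real^2) \<Rightarrow> (nat \<Rightarrow> real^2) \<Rightarrow> (real^2 \<Rightarrow> real) \<Rightarrow> nat \<Rightarrow> real" where
  "B2 cm cp u k = (u (cp k) - u (cm k)) * (cp k - cm k) $ 2 / barlen cm cp k"

definition Dop :: "(nat \<Rightarrow> real^2) \<Rightarrow> (nat \<Rightarrow> real^2) \<Rightarrow> (real^2 \<Rightarrow> real) \<Rightarrow> nat \<Rightarrow> real" where
  "Dop cm cp w k = w (cp k) - w (cm k)"

definition B1T :: "nat \<Rightarrow> (nat \<Rightarrow> real^2) \<Rightarrow> (nat \<Rightarrow> real^2) \<Rightarrow> (nat \<Rightarrow> real) \<Rightarrow> real^2 \<Rightarrow> real" where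
  "B1T m cm cp s x = (\<Sum>k<m. s k * (of_bool (cp k = x) - of_bool (cm k = x)) * (cp k - cm k) $ 1 / barlen cm cp k)"

definition B2T :: "nat \<Rightarrow> (nat \<Rightarrow> real^2) \<Rightarrow> (nat \<Rightarrow> real^2) \<Rightarrow> (nat \<Rightarrow> real) \<Rightarrow> real^2 \<Rightarrow> real" where
  "B2T m cm cp s x = (\<Sum>k<m. s k * (of_bool (cp k = x) - of_bool (cm k = x)) * (cp k - cm k) $ 2 / barlen cm cp k)"

definition DT :: "nat \<Rightarrow> (nat \<Rightarrow> real^2) \<Rightarrow> (nat \<Rightarrow> real^2) \<Rightarrow> (nat \<Rightarrow> real) \<Rightarrow> real^2 \<Rightarrow> real" where
  "DT m cm cp q x = (\<Sum>k<m. q k * (of_bool (cp k = x) - of_bool (cm k = x)))"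

definition loadwork :: "(real^2) set \<Rightarrow> (real^2 \<Rightarrow> real) \<Rightarrow> (real^2 \<Rightarrow> real) \<Rightarrow> real" where
  "loadwork N f w = (\<Sum>x\<in>N. f x * w x)"

definition P_feas :: "nat \<Rightarrow> (nat \<Rightarrow> real^2) \<Rightarrow> (nat \<Rightarrow> real^2) \<Rightarrow> (real^2) set \<Rightarrow> (real^2 \<Rightarrow> real)
    \<Rightarrow> (nat \<Rightarrow> real) \<Rightarrow> (nat \<Rightarrow> real) \<Rightarrow> (nat \<Rightarrow> real) \<Rightarrow> bool" where
  "P_feas m cm cp N f s q r \<longleftrightarrow>
     (\<forall>k<m. s k \<ge> 0 \<and> r k \<ge> 0 \<and> inK (r k) (s k) (q k)) \<and>
     (\<forall>x\<in>N. B1T m cm cp s x = 0 \<and> B2T m cm cp s x = 0 \<and> DT m cm cp q x = f x)"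

definition P_obj :: "nat \<Rightarrow> (nat \<Rightarrow> real^2) \<Rightarrow> (nat \<Rightarrow> real^2) \<Rightarrow> (nat \<Rightarrow> real) \<Rightarrow> (nat \<Rightarrow> real) \<Rightarrow> real" where
  "P_obj m cm cp s r = (\<Sum>k<m. barlen cm cp k * s k) + 2 * (\<Sum>k<m. barlen cm cp k * r k)"

definition ZX :: "nat \<Rightarrow> (nat \<Rightarrow> real^2) \<Rightarrow> (nat \<Rightarrow> real^2) \<Rightarrow> (real^2) set \<Rightarrow> (real^2 \<Rightarrow> real) \<Rightarrow> real" where
  "ZX m cm cp N f = Inf {P_obj m cm cp s r | s q r. P_feas m cm cp N f s q r}"

definition Pd_feas :: "nat \<Rightarrow> (nat \<Rightarrow> real^2) \<Rightarrow> (nat \<Rightarrow> real^2) \<Rightarrow> (real^2) set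
    \<Rightarrow> (real^2 \<Rightarrow> real) \<Rightarrow> (real^2 \<Rightarrow> real) \<Rightarrow> (real^2 \<Rightarrow> real)
    \<Rightarrow> (nat \<Rightarrow> real) \<Rightarrow> (nat \<Rightarrow> real) \<Rightarrow> (nat \<Rightarrow> real) \<Rightarrow> bool" where
  "Pd_feas m cm cp N u1 u2 w t1 t2 t3 \<longleftrightarrow>
     nodevec N u1 \<and> nodevec N u2 \<and> nodevec N w \<and>
     (\<forall>k<m. t1 k \<ge> 0 \<and> t2 k \<ge> 0 \<and>
        t2 k + B1 cm cp u1 k + B2 cm cp u2 k = barlen cm cp k \<and>
        t3 k + Dop cm cp w k = 0 \<and>
        t1 k = 2 * barlen cm cp k \<and>
        inK (t1 k) (t2 k) (t3 k))"

definition Delta :: "(nat \<Rightarrow> real^2) \<Rightarrow> (nat \<Rightarrow> real^2) \<Rightarrow> (real^2 \<Rightarrow> real) \<Rightarrow> nat \<Rightarrow> real" where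
  "Delta cm cp z k = Dop cm cp z k / barlen cm cp k"

definition Jd :: "(nat \<Rightarrow> real^2) \<Rightarrow> (nat \<Rightarrow> real^2) \<Rightarrow> (real^2 \<Rightarrow> real) \<Rightarrow> nat \<Rightarrow> real" where
  "Jd cm cp z k = sqrt (1 + (Delta cm cp z k)^2)"

definition lhat :: "(nat \<Rightarrow> real^2) \<Rightarrow> (nat \<Rightarrow> real^2) \<Rightarrow> (real^2 \<Rightarrow> real) \<Rightarrow> nat \<Rightarrow> real" where
  "lhat cm cp z k = Jd cm cp z k * barlen cm cp k"

definition strain :: "(nat \<Rightarrow> real^2) \<Rightarrow> (nat \<Rightarrow> real^2) \<Rightarrow> (real^2 \<Rightarrow> real) \<Rightarrow> (real^2 \<Rightarrow> real) \<Rightarrow> nat \<Rightarrow> real" where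
  "strain cm cp u1 u2 k = (B1 cm cp u1 k + B2 cm cp u2 k) / barlen cm cp k"

definition strainhat :: "(nat \<Rightarrow> real^2) \<Rightarrow> (nat \<Rightarrow> real^2) \<Rightarrow> (real^2 \<Rightarrow> real) \<Rightarrow> (real^2 \<Rightarrow> real)
    \<Rightarrow> (real^2 \<Rightarrow> real) \<Rightarrow> (real^2 \<Rightarrow> real) \<Rightarrow> nat \<Rightarrow> real" where
  "strainhat cm cp u1 u2 w z k =
     (strain cm cp u1 u2 k + Delta cm cp z k * Delta cm cp w k) / (1 + (Delta cm cp z k)^2)"

definition disp_obj :: "nat \<Rightarrow> (nat \<Rightarrow> real^2) \<Rightarrow> (nat \<Rightarrow> real^2) \<Rightarrow> (real^2) set \<Rightarrow> (real^2 \<Rightarrow> real) \<Rightarrow> real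
    \<Rightarrow> (real^2 \<Rightarrow> real) \<Rightarrow> (nat \<Rightarrow> real)
    \<Rightarrow> (real^2 \<Rightarrow> real) \<Rightarrow> (real^2 \<Rightarrow> real) \<Rightarrow> (real^2 \<Rightarrow> real) \<Rightarrow> real" where
  "disp_obj m cm cp N f E0 z a u1 u2 w =
     loadwork N f w
     - E0 / 2 * (\<Sum>k<m. (max 0 (strainhat cm cp u1 u2 w z k))^2 * a k * lhat cm cp z k)"

definition compliance :: "nat \<Rightarrow> (nat \<Rightarrow> real^2) \<Rightarrow> (nat \<Rightarrow> real^2) \<Rightarrow> (real^2) set \<Rightarrow> (real^2 \<Rightarrow> real) \<Rightarrow> real
    \<Rightarrow> (real^2 \<Rightarrow> real) \<Rightarrow> (nat \<Rightarrow> real) \<Rightarrow> ereal" where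
  "compliance m cm cp N f E0 z a =
     (SUP uw \<in> {(u1, u2, w). nodevec N u1 \<and> nodevec N u2 \<and> nodevec N w}.
        ereal (case uw of (u1, u2, w) \<Rightarrow> disp_obj m cm cp N f E0 z a u1 u2 w))"

definition qdiv :: "real \<Rightarrow> real \<Rightarrow> ereal" where
  "qdiv c d = (if d = 0 then (if c = 0 then 0 else \<infinity>) else ereal (c / d))"

definition stress_feas :: "nat \<Rightarrow> (nat \<Rightarrow> real^2) \<Rightarrow> (nat \<Rightarrow> real^2) \<Rightarrow> (real^2) set \<Rightarrow> (real^2 \<Rightarrow> real)
    \<Rightarrow> (real^2 \<Rightarrow> real) \<Rightarrow> (nat \<Rightarrow> real) \<Rightarrow> bool" where
  "stress_feas m cm cp N f z sh \<longleftrightarrow>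
     (\<forall>k<m. sh k \<ge> 0) \<and>
     (let s = (\<lambda>k. sh k / Jd cm cp z k);
          q = (\<lambda>k. Delta cm cp z k * sh k / Jd cm cp z k)
      in \<forall>x\<in>N. B1T m cm cp s x = 0 \<and> B2T m cm cp s x = 0 \<and> DT m cm cp q x = f x)"

definition stress_obj :: "nat \<Rightarrow> (nat \<Rightarrow> real^2) \<Rightarrow> (nat \<Rightarrow> real^2) \<Rightarrow> real
    \<Rightarrow> (real^2 \<Rightarrow> real) \<Rightarrow> (nat \<Rightarrow> real) \<Rightarrow> (nat \<Rightarrow> real) \<Rightarrow> ereal" where
  "stress_obj m cm cp E0 z a sh =
     ereal (1 / (2 * E0)) * (\<Sum>k<m. qdiv ((sh k)^2) (a k) * ereal (lhat cm cp z k))"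

definition MCGS_feas :: "nat \<Rightarrow> (nat \<Rightarrow> real^2) \<Rightarrow> (nat \<Rightarrow> real^2) \<Rightarrow> (real^2) set \<Rightarrow> real
    \<Rightarrow> (real^2 \<Rightarrow> real) \<Rightarrow> (nat \<Rightarrow> real) \<Rightarrow> bool" where
  "MCGS_feas m cm cp N V0 z a \<longleftrightarrow>
     nodevec N z \<and> (\<forall>k<m. a k \<ge> 0) \<and> (\<Sum>k<m. a k * lhat cm cp z k) \<le> V0"

definition Cmin :: "nat \<Rightarrow> (nat \<Rightarrow> real^2) \<Rightarrow> (nat \<Rightarrow> real^2) \<Rightarrow> (real^2) set \<Rightarrow> (real^2 \<Rightarrow> real)
    \<Rightarrow> real \<Rightarrow> real \<Rightarrow> ereal" where
  "Cmin m cm cp N f E0 V0 =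
     (INF za \<in> {(z, a). MCGS_feas m cm cp N V0 z a}. compliance m cm cp N f E0 (fst za) (snd za))"

end

theory Submission
  imports Defs
begin

lemma farkas_gen:
  fixes comb :: "real \<Rightarrow> 'w \<Rightarrow> 'w \<Rightarrow> 'w"
    and m :: nat
  assumes "\<forall>i<m. \<forall>c x y. a i (comb c x y) = a i x - c * a i y"
    and "\<forall>c x y. \<phi> (comb c x y) = \<phi> x - c * \<phi> y"
  shows "(\<exists>y. (\<forall>i<m. 0 \<le> y i) \<and> (\<forall>x. \<phi> x = (\<Sum>i<m. y i * a i x))) \<or>
         (\<exists>x. (\<forall>i<m. 0 \<le> a i x) \<and> \<phi> x < 0)"
  using assms
proof (induction m arbitrary: a \<phi>)
  case 0
  show ?case
  proof (cases "\<forall>x. \<phi> x = 0")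
    case True then show ?thesis by auto
  next
    case False
    then obtain x where x: "\<phi> x \<noteq> 0" by auto
    have z0: "\<phi> (comb 1 x x) = 0" using "0.prems"(2) by simp
    have "\<phi> (comb 1 (comb 1 x x) x) = - \<phi> x" using "0.prems"(2) z0 by simp
    then show ?thesis using x
      by (metis lessThan_0 emptyE lessThan_iff neg_less_0_iff_less linorder_neqE_linordered_idom)
  qed
next
  case (Suc m)
  have linA: "\<forall>i<m. \<forall>c x y. a i (comb c x y) = a i x - c * a i y" using Suc.prems(1) by auto
  from Suc.IH[OF linA Suc.prems(2)]
  show ?case
  proof
    assume "\<exists>y. (\<forall>i<m. 0 \<le> y i) \<and> (\<forall>x. \<phi> x = (\<Sum>i<m. y i * a i x))"
    then obtain y where y: "\<forall>i<m. 0 \<le> y i" "\<forall>x. \<phi> x = (\<Sum>i<m. y i * a i x)" by blast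
    define y' where "y' = y(m := 0)"
    have "\<forall>i<Suc m. 0 \<le> y' i" using y(1) by (simp add: y'_def less_Suc_eq)
    moreover have "\<forall>x. \<phi> x = (\<Sum>i<Suc m. y' i * a i x)"
    proof
      fix x
      have "(\<Sum>i<Suc m. y' i * a i x) = (\<Sum>i<m. y' i * a i x)" by (simp add: y'_def)
      also have "\<dots> = (\<Sum>i<m. y i * a i x)" by (rule sum.cong) (auto simp: y'_def)
      finally show "\<phi> x = (\<Sum>i<Suc m. y' i * a i x)" using y(2) by simp
    qed
    ultimately show ?thesis by blast
  next
    assume "\<exists>x. (\<forall>i<m. 0 \<le> a i x) \<and> \<phi> x < 0"
    then obtain x where x: "\<forall>i<m. 0 \<le> a i x" "\<phi> x < 0" by blast
    show ?thesis
    proof (cases "0 \<le> a m x")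
      case True
      then have "\<forall>i<Suc m. 0 \<le> a i x" using x(1) less_Suc_eq by auto
      then show ?thesis using x(2) by blast
    next
      case False
      define \<alpha> where "\<alpha> = a m x"
      have \<alpha>: "\<alpha> < 0" using False \<alpha>_def by simp
      define a' where "a' = (\<lambda>i v. a i v - (a i x / \<alpha>) * a m v)"
      define \<phi>' where "\<phi>' = (\<lambda>v. \<phi> v - (\<phi> x / \<alpha>) * a m v)"
      have am: "\<forall>c v w. a m (comb c v w) = a m v - c * a m w" using Suc.prems(1) by simp
      have linA': "\<forall>i<m. \<forall>c v w. a' i (comb c v w) = a' i v - c * a' i w"
      proof (intro allI impI)
        fix i c v w assume i: "i < m"
        have e1: "a i (comb c v w) = a i v - c * a i w" using Suc.prems(1) i by simp
        have e2: "a m (comb c v w) = a m v - c * a m w" using am by simp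
        show "a' i (comb c v w) = a' i v - c * a' i w"
          unfolding a'_def e1 e2 using \<alpha> by (simp add: field_simps)
      qed
      have linP': "\<forall>c v w. \<phi>' (comb c v w) = \<phi>' v - c * \<phi>' w"
      proof (intro allI)
        fix c v w
        have e1: "\<phi> (comb c v w) = \<phi> v - c * \<phi> w" using Suc.prems(2) by simp
        have e2: "a m (comb c v w) = a m v - c * a m w" using am by simp
        show "\<phi>' (comb c v w) = \<phi>' v - c * \<phi>' w"
          unfolding \<phi>'_def e1 e2 using \<alpha> by (simp add: field_simps)
      qed
      from Suc.IH[OF linA' linP'] show ?thesis
      proof
        assume "\<exists>y. (\<forall>i<m. 0 \<le> y i) \<and> (\<forall>v. \<phi>' v = (\<Sum>i<m. y i * a' i v))"
        then obtain y where y: "\<forall>i<m. 0 \<le> y i" "\<forall>v. \<phi>' v = (\<Sum>i<m. y i * a' i v)" by blast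
        define ym where "ym = (\<phi> x - (\<Sum>i<m. y i * a i x)) / \<alpha>"
        have "(\<Sum>i<m. y i * a i x) \<ge> 0" using y(1) x(1) by (intro sum_nonneg) auto
        then have ym0: "ym \<ge> 0" using x(2) \<alpha> unfolding ym_def
          by (intro divide_nonpos_neg) auto
        define y' where "y' = y(m := ym)"
        have "\<forall>i<Suc m. 0 \<le> y' i" using y(1) ym0 by (simp add: y'_def less_Suc_eq)
        moreover have "\<forall>v. \<phi> v = (\<Sum>i<Suc m. y' i * a i v)"
        proof
          fix v
          have s1: "(\<Sum>i<m. y' i * a i v) = (\<Sum>i<m. y i * a i v)" by (rule sum.cong) (auto simp: y'_def)
          have "\<phi> v = \<phi>' v + (\<phi> x / \<alpha>) * a m v" by (simp add: \<phi>'_def)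
          also have "\<phi>' v = (\<Sum>i<m. y i * a i v) - (\<Sum>i<m. y i * a i x) / \<alpha> * a m v"
            using y(2) by (simp add: a'_def right_diff_distrib sum_subtractf sum_distrib_right sum_divide_distrib mult.assoc)
          finally have "\<phi> v = (\<Sum>i<m. y i * a i v) + ym * a m v"
            by (simp add: ym_def diff_divide_distrib algebra_simps)
          then show "\<phi> v = (\<Sum>i<Suc m. y' i * a i v)" using s1 by (simp add: y'_def)
        qed
        ultimately show ?thesis by blast
      next
        assume "\<exists>v. (\<forall>i<m. 0 \<le> a' i v) \<and> \<phi>' v < 0"
        then obtain v where v: "\<forall>i<m. 0 \<le> a' i v" "\<phi>' v < 0" by blast
        define v'' where "v'' = comb (a m v / \<alpha>) v x"
        have "\<forall>i<m. a i v'' = a' i v" using Suc.prems(1) by (auto simp: v''_def a'_def)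
        moreover have "a m v'' = 0" using am \<alpha> by (simp add: v''_def \<alpha>_def)
        moreover have "\<phi> v'' = \<phi>' v" using Suc.prems(2) by (simp add: v''_def \<phi>'_def)
        ultimately have "\<forall>i<Suc m. 0 \<le> a i v''" "\<phi> v'' < 0" using v less_Suc_eq by auto
        then show ?thesis by blast
      qed
    qed
  qed
qed

lemma sum_delta_nodevec:
  assumes "finite N" "nodevec N v"
  shows "(\<Sum>x\<in>N. of_bool (p = x) * v x) = v p"
proof -
  have "(\<Sum>x\<in>N. of_bool (p = x) * v x) = (\<Sum>x\<in>N. if p = x then v p else 0)"
    by (rule sum.cong) auto
  also have "\<dots> = (if p \<in> N then v p else 0)" using assms(1) by (simp add: sum.delta)
  also have "\<dots> = v p" using assms(2) by (auto simp: nodevec_def)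
  finally show ?thesis .
qed

lemma exch:
  assumes "finite N" "nodevec N v"
  shows "(\<Sum>x\<in>N. (\<Sum>k<m. c k * (of_bool (cp k = x) - of_bool (cm k = x))) * v x)
         = (\<Sum>k<m. c k * (v (cp k) - v (cm k)))"
proof -
  have "(\<Sum>x\<in>N. (\<Sum>k<m. c k * (of_bool (cp k = x) - of_bool (cm k = x))) * v x)
      = (\<Sum>x\<in>N. \<Sum>k<m. c k * (of_bool (cp k = x) * v x - of_bool (cm k = x) * v x))"
    unfolding sum_distrib_right by (intro sum.cong refl) (simp add: algebra_simps)
  also have "\<dots> = (\<Sum>k<m. \<Sum>x\<in>N. c k * (of_bool (cp k = x) * v x - of_bool (cm k = x) * v x))"
    by (rule sum.swap)
  also have "\<dots> = (\<Sum>k<m. c k * ((\<Sum>x\<in>N. of_bool (cp k = x) * v x) - (\<Sum>x\<in>N. of_bool (cm k = x) * v x)))"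
    by (intro sum.cong refl) (simp add: sum_distrib_left sum_subtractf right_diff_distrib)
  also have "\<dots> = (\<Sum>k<m. c k * (v (cp k) - v (cm k)))"
    using sum_delta_nodevec[OF assms] by simp
  finally show ?thesis .
qed

lemma DT_exch:
  assumes "finite N" "nodevec N v"
  shows "(\<Sum>x\<in>N. DT m cm cp q x * v x) = (\<Sum>k<m. q k * Dop cm cp v k)"
  unfolding DT_def Dop_def using exch[OF assms, where m=m and c=q and cp=cp and cm=cm] by simp

lemma B1T_exch:
  assumes "finite N" "nodevec N v"
  shows "(\<Sum>x\<in>N. B1T m cm cp s x * v x) = (\<Sum>k<m. s k * B1 cm cp v k)"
proof -
  have "(\<Sum>x\<in>N. B1T m cm cp s x * v x) = (\<Sum>x\<in>N. (\<Sum>k<m. (s k * (cp k - cm k) $ 1 / barlen cm cp k) * (of_bool (cp k = x) - of_bool (cm k = x))) * v x)"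
    unfolding B1T_def by (intro sum.cong refl arg_cong2[where f="times"]) (simp add: algebra_simps)
  also have "\<dots> = (\<Sum>k<m. (s k * (cp k - cm k) $ 1 / barlen cm cp k) * (v (cp k) - v (cm k)))"
    by (rule exch[OF assms])
  also have "\<dots> = (\<Sum>k<m. s k * B1 cm cp v k)"
    unfolding B1_def by (intro sum.cong refl) (simp add: algebra_simps)
  finally show ?thesis .
qed

lemma B2T_exch:
  assumes "finite N" "nodevec N v"
  shows "(\<Sum>x\<in>N. B2T m cm cp s x * v x) = (\<Sum>k<m. s k * B2 cm cp v k)"
proof -
  have "(\<Sum>x\<in>N. B2T m cm cp s x * v x) = (\<Sum>x\<in>N. (\<Sum>k<m. (s k * (cp k - cm k) $ 2 / barlen cm cp k) * (of_bool (cp k = x) - of_bool (cm k = x))) * v x)"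
    unfolding B2T_def by (intro sum.cong refl arg_cong2[where f="times"]) (simp add: algebra_simps)
  also have "\<dots> = (\<Sum>k<m. (s k * (cp k - cm k) $ 2 / barlen cm cp k) * (v (cp k) - v (cm k)))"
    by (rule exch[OF assms])
  also have "\<dots> = (\<Sum>k<m. s k * B2 cm cp v k)"
    unfolding B2_def by (intro sum.cong refl) (simp add: algebra_simps)
  finally show ?thesis .
qed

lemma B1T_ind: "(\<Sum>k<m. s k * B1 cm cp (\<lambda>p. of_bool (p = x)) k) = B1T m cm cp s x"
  unfolding B1T_def B1_def by (auto intro!: sum.cong simp: algebra_simps eq_commute[of x])

lemma B2T_ind: "(\<Sum>k<m. s k * B2 cm cp (\<lambda>p. of_bool (p = x)) k) = B2T m cm cp s x"
  unfolding B2T_def B2_def by (auto intro!: sum.cong simp: algebra_simps eq_commute[of x])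

lemma DT_ind: "(\<Sum>k<m. q k * Dop cm cp (\<lambda>p. of_bool (p = x)) k) = DT m cm cp q x"
  unfolding DT_def Dop_def by (auto intro!: sum.cong simp: algebra_simps eq_commute[of x])

lemma B1_lin: "B1 cm cp (\<lambda>p. x p + c * y p) k = B1 cm cp x k + c * B1 cm cp y k"
  unfolding B1_def by (simp add: divide_inverse algebra_simps)
lemma B2_lin: "B2 cm cp (\<lambda>p. x p + c * y p) k = B2 cm cp x k + c * B2 cm cp y k"
  unfolding B2_def by (simp add: divide_inverse algebra_simps)
lemma Dop_lin: "Dop cm cp (\<lambda>p. x p + c * y p) k = Dop cm cp x k + c * Dop cm cp y k"
  unfolding Dop_def by (simp add: algebra_simps)
lemma B1_lin': "B1 cm cp (\<lambda>p. x p - c * y p) k = B1 cm cp x k - c * B1 cm cp y k"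
  unfolding B1_def by (simp add: divide_inverse algebra_simps)
lemma B2_lin': "B2 cm cp (\<lambda>p. x p - c * y p) k = B2 cm cp x k - c * B2 cm cp y k"
  unfolding B2_def by (simp add: divide_inverse algebra_simps)
lemma Dop_lin': "Dop cm cp (\<lambda>p. x p - c * y p) k = Dop cm cp x k - c * Dop cm cp y k"
  unfolding Dop_def by (simp add: algebra_simps)
lemma B1_scale: "B1 cm cp (\<lambda>p. c * y p) k = c * B1 cm cp y k"
  unfolding B1_def by (simp add: divide_inverse algebra_simps)
lemma B2_scale: "B2 cm cp (\<lambda>p. c * y p) k = c * B2 cm cp y k"
  unfolding B2_def by (simp add: divide_inverse algebra_simps)
lemma Dop_scale: "Dop cm cp (\<lambda>p. c * y p) k = c * Dop cm cp y k"
  unfolding Dop_def by (simp add: algebra_simps)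
lemma B1_zero: "B1 cm cp (\<lambda>p. 0) k = 0" unfolding B1_def by simp
lemma B2_zero: "B2 cm cp (\<lambda>p. 0) k = 0" unfolding B2_def by simp
lemma Dop_zero: "Dop cm cp (\<lambda>p. 0) k = 0" unfolding Dop_def by simp

lemma loadwork_lin: "loadwork N f (\<lambda>p. x p + c * y p) = loadwork N f x + c * loadwork N f y"
  unfolding loadwork_def by (simp add: algebra_simps sum.distrib sum_distrib_left)
lemma loadwork_lin': "loadwork N f (\<lambda>p. x p - c * y p) = loadwork N f x - c * loadwork N f y"
  unfolding loadwork_def by (simp add: algebra_simps sum_subtractf sum_distrib_left)
lemma loadwork_scale: "loadwork N f (\<lambda>p. c * y p) = c * loadwork N f y"
  unfolding loadwork_def by (simp add: algebra_simps sum_distrib_left)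
lemma loadwork_zero: "loadwork N f (\<lambda>p. 0) = 0"
  unfolding loadwork_def by simp
lemma loadwork_ind: "finite N \<Longrightarrow> x \<in> N \<Longrightarrow> loadwork N f (\<lambda>p. of_bool (p = x)) = f x"
  unfolding loadwork_def by (simp add: eq_commute[of _ x] if_distrib sum.delta cong: if_cong)

lemma strainhat_scale:
  "strainhat cm cp (\<lambda>x. c * u1 x) (\<lambda>x. c * u2 x) (\<lambda>x. c * w x) z k = c * strainhat cm cp u1 u2 w z k"
  unfolding strainhat_def strain_def Delta_def B1_scale B2_scale Dop_scale
  by (simp add: divide_inverse algebra_simps)

lemma cone_ineq:
  fixes r s q t1 t2 t3 :: real
  assumes "inK r s q" "inK t1 t2 t3"
  shows "r * t1 + s * t2 + q * t3 \<ge> 0"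
proof -
  have a: "r \<ge> 0" "s \<ge> 0" "2*r* s \<ge> q^2" "t1 \<ge> 0" "t2 \<ge> 0" "2*t1*t2 \<ge> t3^2"
    using assms by (auto simp: inK_def)
  have "(q*t3)^2 = q^2 * t3^2" by (simp add: power_mult_distrib)
  also have "\<dots> \<le> (2*r* s) * (2*t1*t2)" using a by (intro mult_mono) auto
  also have "\<dots> \<le> (r*t1 + s*t2)^2"
  proof -
    have "0 \<le> (r*t1 - s*t2)^2" by simp
    then show ?thesis by (simp add: power2_eq_square algebra_simps)
  qed
  finally have "\<bar>q*t3\<bar> \<le> \<bar>r*t1 + s*t2\<bar>" using abs_le_square_iff by blast
  moreover have "r*t1 + s*t2 \<ge> 0" using a by simp
  ultimately show ?thesis by linarith
qed

lemma cone_comp: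
  fixes r s q t1 t2 t3 :: real
  assumes "inK r s q" "inK t1 t2 t3" "t1 > 0" "r * t1 + s * t2 + q * t3 = 0"
  shows "q * t1 + s * t3 = 0" "2 * r * t1^2 = s * t3^2" "s > 0 \<Longrightarrow> t3^2 = 2 * t1 * t2"
proof -
  have a: "r \<ge> 0" "s \<ge> 0" "2*r* s \<ge> q^2" "t1 \<ge> 0" "t2 \<ge> 0" "2*t1*t2 \<ge> t3^2"
    using assms by (auto simp: inK_def)
  define A where "A = r*t1"
  define B where "B = s*t2"
  have AB: "A + B = - (q*t3)" using assms(4) by (simp add: A_def B_def)
  have "(A+B)^2 = q^2 * t3^2" using AB by (simp add: power_mult_distrib)
  also have "\<dots> \<le> (2*r* s) * (2*t1*t2)" using a by (intro mult_mono) auto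
  also have "\<dots> = 4*A*B" by (simp add: A_def B_def)
  finally have "(A - B)^2 \<le> 0" by (simp add: power2_eq_square algebra_simps)
  then have AeqB: "A = B" by simp
  have qt3: "q * t3 = - 2 * r * t1" using AB AeqB by (simp add: A_def)
  have e1: "q^2 * t1^2 \<le> 2*r* s*t1^2" using a by (intro mult_right_mono) auto
  have e2: "s^2 * t3^2 \<le> 2*r* s*t1^2"
  proof -
    have "s^2 * t3^2 \<le> s^2 * (2*t1*t2)" using a by (intro mult_left_mono) auto
    also have "\<dots> = 2 * s * t1 * B" by (simp add: B_def power2_eq_square)
    also have "\<dots> = 2*r* s*t1^2" using AeqB by (simp add: A_def power2_eq_square)
    finally show ?thesis .
  qed
  have "(q*t1 + s*t3)^2 = q^2*t1^2 + 2* s*t1*(q*t3) + s^2*t3^2"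
    by (simp add: power2_eq_square algebra_simps)
  also have "\<dots> = q^2*t1^2 - 4*r* s*t1^2 + s^2*t3^2" using qt3 by (simp add: power2_eq_square algebra_simps)
  also have "\<dots> \<le> 0" using e1 e2 by simp
  finally have "(q*t1 + s*t3)^2 \<le> 0" .
  then show c1: "q * t1 + s * t3 = 0" by simp
  have "s * t3 = - q * t1" using c1 by simp
  moreover have "s * t3^2 = (s*t3)*t3" by (simp add: power2_eq_square)
  ultimately have "s * t3^2 = - t1 * (q * t3)" by simp
  then show c2: "2 * r * t1^2 = s * t3^2" using qt3 by (simp add: power2_eq_square algebra_simps)
  assume "s > 0"
  have "2 * t1 * B = 2 * r * t1^2" using AeqB by (simp add: A_def power2_eq_square)
  then have "s * t3^2 = 2 * t1 * B" using c2 by simp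
  then have "s * t3^2 = s * (2 * t1 * t2)" by (simp add: B_def algebra_simps)
  then show "t3^2 = 2 * t1 * t2" using \<open>s > 0\<close> by simp
qed

lemma strain_le1:
  fixes l B D d :: real
  assumes "l > 0" "D^2 \<le> 4*l*(l - B)"
  shows "(B/l + d * (D/l)) / (1 + d^2) \<le> 1"
proof -
  have "B/l \<le> 1 - (D/l)^2/4"
  proof -
    have "D^2/(4*l^2) \<le> 4*l*(l-B)/(4*l^2)" using assms by (intro divide_right_mono) auto
    also have "4*l*(l-B)/(4*l^2) = 1 - B/l" using assms(1) by (simp add: field_simps power2_eq_square)
    finally show ?thesis by (simp add: power_divide)
  qed
  moreover have "0 \<le> (d - D/l/2)^2" by simp
  ultimately have "B/l + d * (D/l) \<le> 1 + d^2" by (simp add: power2_eq_square algebra_simps)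
  moreover have "1 + d^2 > 0" by (simp add: add_pos_nonneg)
  ultimately show ?thesis by simp
qed

lemma strain_eq1:
  fixes l B D :: real
  assumes "l > 0" "D^2 = 4*l*(l - B)"
  shows "(B/l + (D/2/l) * (D/l)) / (1 + (D/2/l)^2) = 1"
proof -
  have "(D/2/l) * (D/l) = D^2/(2*l^2)" by (simp add: power2_eq_square)
  also have "\<dots> = 4*l*(l - B)/(2*l^2)" by (simp only: assms(2))
  also have "\<dots> = 2*(l-B)/l" using assms(1) by (simp add: field_simps power2_eq_square)
  finally have n0: "B/l + (D/2/l) * (D/l) = B/l + 2*(l-B)/l" by simp
  have n: "B/l + (D/2/l) * (D/l) = 2 - B/l" unfolding n0 using assms(1) by (simp add: field_simps)
  have "(D/2/l)^2 = D^2/(4*l^2)" by (simp add: power_divide power2_eq_square)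
  also have "\<dots> = 4*l*(l - B)/(4*l^2)" by (simp only: assms(2))
  also have "\<dots> = (l-B)/l" using assms(1) by (simp add: field_simps power2_eq_square)
  finally have d0: "1 + (D/2/l)^2 = 1 + (l-B)/l" by simp
  have d: "1 + (D/2/l)^2 = 2 - B/l" unfolding d0 using assms(1) by (simp add: field_simps)
  have "2 - B/l \<noteq> 0" using d by (metis add_pos_nonneg zero_less_one zero_le_power2 less_irrefl)
  then show ?thesis using n d by simp
qed

lemma alg1:
  fixes L d s X Y D :: real
  assumes "L > 0" "d > 0"
  shows "L * d * s * ((X / L + D * (Y / L)) / d) = s * (X + D * Y)"
  using assms by (simp add: field_simps)

lemma pen_le:
  fixes c x :: real
  assumes "c > 0"
  shows "x - (max 0 x)^2 / (2*c) \<le> c/2"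
proof (cases "x \<le> 0")
  case True then show ?thesis using assms by (simp add: max_def)
next
  case False
  have "0 \<le> (x - c)^2" by simp
  then have "2*c*x - x^2 \<le> c^2" by (simp add: power2_eq_square algebra_simps)
  then have "(2*c*x - x^2)/(2*c) \<le> c^2/(2*c)" using assms by (intro divide_right_mono) auto
  then show ?thesis using False assms by (simp add: max_def field_simps power2_eq_square)
qed

lemma core:
  fixes N :: "(real^2) set" and f :: "real^2 \<Rightarrow> real" and E0 V0 :: real
    and m :: nat and cm cp :: "nat \<Rightarrow> real^2"
    and s q r :: "nat \<Rightarrow> real" and u1 u2 w :: "real^2 \<Rightarrow> real"
    and Z :: real and z u1el u2el wel :: "real^2 \<Rightarrow> real" and a sh :: "nat \<Rightarrow> real"
  assumes finN: "finite N" and lpos: "\<forall>k<m. barlen cm cp k > 0"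
    and E0: "E0 > 0" and V0: "V0 > 0"
    and Zpos: "ZX m cm cp N f > 0"
    and Psol1: "P_feas m cm cp N f s q r"
    and Psol2: "\<forall>s' q' r'. P_feas m cm cp N f s' q' r' \<longrightarrow> P_obj m cm cp s r \<le> P_obj m cm cp s' r'"
    and Pdsol: "\<exists>t1 t2 t3. Pd_feas m cm cp N u1 u2 w t1 t2 t3 \<and>
                 (\<forall>u1' u2' w' t1' t2' t3'. Pd_feas m cm cp N u1' u2' w' t1' t2' t3' \<longrightarrow>
                    loadwork N f w' \<le> loadwork N f w)"
    and Z_def: "Z = ZX m cm cp N f"
    and z_def: "z = (\<lambda>x. w x / 2)"
    and a_def: "a = (\<lambda>k. V0 / Z * (Jd cm cp z k * s k))"
    and u1el_def: "u1el = (\<lambda>x. Z / (E0 * V0) * u1 x)"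
    and u2el_def: "u2el = (\<lambda>x. Z / (E0 * V0) * u2 x)"
    and wel_def: "wel = (\<lambda>x. Z / (E0 * V0) * w x)"
    and sh_def: "sh = (\<lambda>k. Jd cm cp z k * s k)"
  shows
       "MCGS_feas m cm cp N V0 z a \<and>
       (\<forall>z' a'. MCGS_feas m cm cp N V0 z' a' \<longrightarrow>
          compliance m cm cp N f E0 z a \<le> compliance m cm cp N f E0 z' a') \<and>
       Cmin m cm cp N f E0 V0 = ereal (Z ^ 2 / (2 * E0 * V0)) \<and>
       nodevec N u1el \<and> nodevec N u2el \<and> nodevec N wel \<and>
       (\<forall>u1' u2' w'. nodevec N u1' \<and> nodevec N u2' \<and> nodevec N w' \<longrightarrow>
          disp_obj m cm cp N f E0 z a u1' u2' w' \<le> disp_obj m cm cp N f E0 z a u1el u2el wel) \<and>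
       stress_feas m cm cp N f z sh \<and>
       (\<forall>sh'. stress_feas m cm cp N f z sh' \<longrightarrow>
          stress_obj m cm cp E0 z a sh \<le> stress_obj m cm cp E0 z a sh') \<and>
       (\<forall>k<m. a k \<noteq> 0 \<longrightarrow> strainhat cm cp u1el u2el wel z k = Z / (E0 * V0)) \<and>
       (\<forall>k<m. sh k = E0 * a k * strainhat cm cp u1el u2el wel z k)"
proof -
  define l where "l = barlen cm cp"
  have lp: "\<And>k. k < m \<Longrightarrow> l k > 0" using lpos l_def by auto
  define Bu where "Bu = (\<lambda>k. B1 cm cp u1 k + B2 cm cp u2 k)"
  define Dw where "Dw = Dop cm cp w"
  define FW where "FW = loadwork N f w"
  obtain t1 t2 t3 where pdf: "Pd_feas m cm cp N u1 u2 w t1 t2 t3"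
    and dopt: "\<forall>u1' u2' w' t1' t2' t3'. Pd_feas m cm cp N u1' u2' w' t1' t2' t3' \<longrightarrow> loadwork N f w' \<le> FW"
    using Pdsol FW_def by blast
  have nu1: "nodevec N u1" and nu2: "nodevec N u2" and nw: "nodevec N w"
    using pdf by (auto simp: Pd_feas_def)
  have t1e: "\<And>k. k<m \<Longrightarrow> t1 k = 2 * l k" and t2e: "\<And>k. k<m \<Longrightarrow> t2 k = l k - Bu k"
    and t3e: "\<And>k. k<m \<Longrightarrow> t3 k = - Dw k" and tK: "\<And>k. k<m \<Longrightarrow> inK (t1 k) (t2 k) (t3 k)"
    using pdf by (auto simp: Pd_feas_def l_def Bu_def Dw_def algebra_simps)
  define h where "h = (\<lambda>k. 4 * l k * (l k - Bu k) - (Dw k)^2)"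
  have hnn: "\<And>k. k<m \<Longrightarrow> h k \<ge> 0"
  proof -
    fix k assume k: "k < m"
    have "2 * t1 k * t2 k \<ge> (t3 k)^2" using tK[OF k] by (simp add: inK_def)
    then show "h k \<ge> 0" using t1e[OF k] t2e[OF k] t3e[OF k] by (simp add: h_def)
  qed
  have t2nn: "\<And>k. k<m \<Longrightarrow> l k - Bu k \<ge> 0" using tK t2e by (auto simp: inK_def)
  have dfeas: "loadwork N f W \<le> FW"
    if "nodevec N U1" "nodevec N U2" "nodevec N W"
       "\<forall>k<m. (Dop cm cp W k)^2 \<le> 4 * l k * (l k - (B1 cm cp U1 k + B2 cm cp U2 k))" for U1 U2 W
  proof -
    have "Pd_feas m cm cp N U1 U2 W (\<lambda>k. 2 * l k) (\<lambda>k. l k - (B1 cm cp U1 k + B2 cm cp U2 k)) (\<lambda>k. - Dop cm cp W k)"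
      unfolding Pd_feas_def
    proof (intro conjI allI impI)
      fix k assume k: "k < m"
      have lk: "l k > 0" using lp[OF k] .
      have "0 \<le> 4 * l k * (l k - (B1 cm cp U1 k + B2 cm cp U2 k))"
        using that(4) k by (meson order_trans zero_le_power2)
      then have "0 \<le> l k - (B1 cm cp U1 k + B2 cm cp U2 k)" using lk
        by (simp add: zero_le_mult_iff)
      then show "0 \<le> l k - (B1 cm cp U1 k + B2 cm cp U2 k)" .
      show "0 \<le> 2 * l k" using lk by simp
      show "l k - (B1 cm cp U1 k + B2 cm cp U2 k) + B1 cm cp U1 k + B2 cm cp U2 k = barlen cm cp k"
        by (simp add: l_def)
      show "- Dop cm cp W k + Dop cm cp W k = 0" by simp
      show "2 * l k = 2 * barlen cm cp k" by (simp add: l_def)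
      show "inK (2 * l k) (l k - (B1 cm cp U1 k + B2 cm cp U2 k)) (- Dop cm cp W k)"
        using that(4) k lk \<open>0 \<le> l k - (B1 cm cp U1 k + B2 cm cp U2 k)\<close> by (simp add: inK_def)
    qed (use that in auto)
    then show ?thesis using dopt by blast
  qed
  have sge: "\<And>k. k<m \<Longrightarrow> s k \<ge> 0" and rge: "\<And>k. k<m \<Longrightarrow> r k \<ge> 0"
    and rK: "\<And>k. k<m \<Longrightarrow> inK (r k) (s k) (q k)"
    and eqN: "\<And>x. x \<in> N \<Longrightarrow> B1T m cm cp s x = 0 \<and> B2T m cm cp s x = 0 \<and> DT m cm cp q x = f x"
    using Psol1 by (auto simp: P_feas_def)
  have FWgen: "loadwork N f W = (\<Sum>k<m. q k * Dop cm cp W k)" if "nodevec N W" for W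
  proof -
    have "loadwork N f W = (\<Sum>x\<in>N. DT m cm cp q x * W x)"
      unfolding loadwork_def using eqN by (intro sum.cong) auto
    also have "\<dots> = (\<Sum>k<m. q k * Dop cm cp W k)" by (rule DT_exch[OF finN that])
    finally show ?thesis .
  qed
  have sBgen: "(\<Sum>k<m. s k * (B1 cm cp U1 k + B2 cm cp U2 k)) = 0"
    if "nodevec N U1" "nodevec N U2" for U1 U2
  proof -
    have "(\<Sum>k<m. s k * (B1 cm cp U1 k + B2 cm cp U2 k)) = (\<Sum>k<m. s k * B1 cm cp U1 k) + (\<Sum>k<m. s k * B2 cm cp U2 k)"
      by (simp add: algebra_simps sum.distrib)
    also have "(\<Sum>k<m. s k * B1 cm cp U1 k) = (\<Sum>x\<in>N. B1T m cm cp s x * U1 x)" by (rule B1T_exch[OF finN that(1), symmetric])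
    also have "\<dots> = 0" using eqN by (intro sum.neutral) auto
    also have "(\<Sum>k<m. s k * B2 cm cp U2 k) = (\<Sum>x\<in>N. B2T m cm cp s x * U2 x)" by (rule B2T_exch[OF finN that(2), symmetric])
    also have "\<dots> = 0" using eqN by (intro sum.neutral) auto
    finally show ?thesis by simp
  qed
  have FWq: "FW = (\<Sum>k<m. q k * Dw k)" using FWgen[OF nw] by (simp add: FW_def Dw_def)
  have sB: "(\<Sum>k<m. s k * Bu k) = 0" using sBgen[OF nu1 nu2] by (simp add: Bu_def)
  define T where "T = (\<lambda>k. r k * t1 k + s k * t2 k + q k * t3 k)"
  have Tnn: "\<And>k. k<m \<Longrightarrow> T k \<ge> 0" unfolding T_def using rK tK by (intro cone_ineq)
  have Pobj_split: "P_obj m cm cp s' r' = (\<Sum>k<m. l k * s' k + 2 * (l k * r' k))" for s' r'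
    by (simp add: P_obj_def l_def sum.distrib sum_distrib_left)
  have gap: "P_obj m cm cp s r - FW = (\<Sum>k<m. T k)"
  proof -
    have "(\<Sum>k<m. T k) = (\<Sum>k<m. (l k * s k + 2 * (l k * r k)) - s k * Bu k - q k * Dw k)"
      by (rule sum.cong) (auto simp: T_def t1e t2e t3e algebra_simps)
    also have "\<dots> = P_obj m cm cp s r - (\<Sum>k<m. s k * Bu k) - (\<Sum>k<m. q k * Dw k)"
      by (simp add: sum_subtractf Pobj_split)
    finally show ?thesis using sB FWq by simp
  qed
  have kkt: "P_obj m cm cp s r \<le> FW"
  proof -
    define act where "act = (\<lambda>k. h k = 0)"
    define P where "P = (\<lambda>(d::real^2 \<Rightarrow> real) p. if p \<in> N then d p else 0)"
    define G where "G = (\<lambda>k d1 d2 d3. -4 * l k * (B1 cm cp d1 k + B2 cm cp d2 k) - 2 * Dw k * Dop cm cp d3 k)"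
    define A where "A = (\<lambda>k (d::(real^2\<Rightarrow>real)\<times>(real^2\<Rightarrow>real)\<times>(real^2\<Rightarrow>real)).
                          if act k then G k (P (fst d)) (P (fst (snd d))) (P (snd (snd d))) else 0)"
    define \<phi> where "\<phi> = (\<lambda>d::(real^2\<Rightarrow>real)\<times>(real^2\<Rightarrow>real)\<times>(real^2\<Rightarrow>real). - loadwork N f (P (snd (snd d))))"
    define comb where "comb = (\<lambda>(c::real) (x::(real^2\<Rightarrow>real)\<times>(real^2\<Rightarrow>real)\<times>(real^2\<Rightarrow>real)) y.
       ((\<lambda>p. fst x p - c * fst y p), (\<lambda>p. fst (snd x) p - c * fst (snd y) p), (\<lambda>p. snd (snd x) p - c * snd (snd y) p)))"
    have Pc: "\<And>x y c. P (\<lambda>p. x p - c * y p) = (\<lambda>p. P x p - c * P y p)" by (auto simp: P_def fun_eq_iff)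
    have Pn: "\<And>d. nodevec N (P d)" by (simp add: P_def nodevec_def)
    have Pid: "\<And>d. nodevec N d \<Longrightarrow> P d = d" by (auto simp: P_def nodevec_def fun_eq_iff)
    have Glin: "G k (\<lambda>p. x1 p - c * y1 p) (\<lambda>p. x2 p - c * y2 p) (\<lambda>p. x3 p - c * y3 p) = G k x1 x2 x3 - c * G k y1 y2 y3"
      for k x1 x2 x3 y1 y2 y3 c
      by (simp add: G_def B1_lin' B2_lin' Dop_lin' algebra_simps)
    have linA: "\<forall>i<m. \<forall>c x y. A i (comb c x y) = A i x - c * A i y"
      by (simp add: A_def comb_def Pc Glin)
    have linP: "\<forall>c x y. \<phi> (comb c x y) = \<phi> x - c * \<phi> y"
      by (simp add: \<phi>_def comb_def Pc loadwork_lin')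
    from farkas_gen[OF linA linP] show ?thesis
    proof
      assume "\<exists>x. (\<forall>i<m. 0 \<le> A i x) \<and> \<phi> x < 0"
      then obtain d where d: "\<forall>i<m. 0 \<le> A i d" "\<phi> d < 0" by blast
      define du1 where "du1 = P (fst d)"
      define du2 where "du2 = P (fst (snd d))"
      define dw where "dw = P (snd (snd d))"
      have Gd: "\<And>k. k<m \<Longrightarrow> act k \<Longrightarrow> G k du1 du2 dw \<ge> 0"
        using d(1) by (auto simp: A_def du1_def du2_def dw_def)
      define fd where "fd = loadwork N f dw"
      have fd: "fd > 0" using d(2) by (simp add: fd_def \<phi>_def dw_def)
      define \<epsilon> where "\<epsilon> = fd / (2 * (\<bar>FW\<bar> + 1))"
      have \<epsilon>: "\<epsilon> > 0" using fd by (simp add: \<epsilon>_def)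
      have a1: "\<epsilon> * (\<bar>FW\<bar> + 1) = fd / 2" unfolding \<epsilon>_def
        by (simp add: field_simps)
      have a1': "\<epsilon> * \<bar>FW\<bar> + \<epsilon> = fd / 2" using a1 by (simp add: distrib_left)
      have a2: "\<epsilon> * FW \<le> \<epsilon> * \<bar>FW\<bar>" using \<epsilon> by (intro mult_left_mono) auto
      have a3: "\<epsilon> * \<bar>FW\<bar> \<ge> 0" using \<epsilon> by simp
      have \<epsilon>FW: "\<epsilon> * FW < fd" using a1' a2 a3 \<epsilon> fd by linarith
      define e1 where "e1 = (\<lambda>p. du1 p - \<epsilon> * u1 p)"
      define e2 where "e2 = (\<lambda>p. du2 p - \<epsilon> * u2 p)"
      define ew where "ew = (\<lambda>p. dw p - \<epsilon> * w p)"
      define Ge where "Ge = (\<lambda>k. G k e1 e2 ew)"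
      have Gu: "G k u1 u2 w = -4 * l k * Bu k - 2 * (Dw k)^2" for k
        by (simp add: G_def Bu_def Dw_def power2_eq_square)
      have Ge_eq: "Ge k = G k du1 du2 dw - \<epsilon> * G k u1 u2 w" for k
        unfolding Ge_def e1_def e2_def ew_def by (rule Glin)
      have Gepos: "Ge k > 0" if k: "k < m" "act k" for k
      proof -
        have "h k = 0" using k act_def by simp
        then have "4 * l k * (l k - Bu k) = (Dw k)^2" by (simp add: h_def)
        then have "G k u1 u2 w = - ((Dw k)^2 + 4 * (l k)^2)" unfolding Gu
          by (simp add: power2_eq_square algebra_simps)
        moreover have "(Dw k)^2 + 4 * (l k)^2 > 0" using lp[OF k(1)] by (simp add: add_nonneg_pos)
        ultimately have "- \<epsilon> * G k u1 u2 w > 0" using \<epsilon> by (metis mult_pos_pos minus_mult_minus neg_0_less_iff_less)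
        then show ?thesis using Ge_eq[of k] Gd[OF k] by simp
      qed
      define fe where "fe = loadwork N f ew"
      have fe: "fe > 0" unfolding fe_def ew_def loadwork_lin' using \<epsilon>FW by (simp add: fd_def FW_def)
      define cc where "cc = (\<lambda>k. (Dop cm cp ew k)^2)"
      have ccnn: "cc k \<ge> 0" for k by (simp add: cc_def)
      define \<delta> where "\<delta> = (\<lambda>k. if act k then Ge k / (cc k + 1) else min 1 (h k / (\<bar>Ge k\<bar> + cc k + 1)))"
      have \<delta>pos: "\<delta> k > 0" if k: "k < m" for k
      proof (cases "act k")
        case True then show ?thesis using Gepos[OF k True] ccnn[of k] by (simp add: \<delta>_def add_nonneg_pos)
      next
        case False
        then have "h k > 0" using hnn[OF k] by (simp add: act_def)
        then show ?thesis using False ccnn[of k] by (simp add: \<delta>_def add_nonneg_pos)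
      qed
      define t where "t = Min (insert 1 (\<delta> ` {..<m}))"
      have tpos: "t > 0" unfolding t_def using \<delta>pos by (subst Min_gr_iff) auto
      have tle: "t \<le> \<delta> k" if "k < m" for k unfolding t_def using that by (intro Min_le) auto
      have tle1: "t \<le> 1" unfolding t_def by (intro Min_le) auto
      define U1 where "U1 = (\<lambda>p. u1 p + t * e1 p)"
      define U2 where "U2 = (\<lambda>p. u2 p + t * e2 p)"
      define W where "W = (\<lambda>p. w p + t * ew p)"
      have ne: "nodevec N e1" "nodevec N e2" "nodevec N ew"
        using Pn nu1 nu2 nw by (auto simp: nodevec_def e1_def e2_def ew_def du1_def du2_def dw_def)
      have nU: "nodevec N U1" "nodevec N U2" "nodevec N W"
        using ne nu1 nu2 nw by (auto simp: nodevec_def U1_def U2_def W_def)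
      have feasU: "\<forall>k<m. (Dop cm cp W k)^2 \<le> 4 * l k * (l k - (B1 cm cp U1 k + B2 cm cp U2 k))"
      proof (intro allI impI)
        fix k assume k: "k < m"
        have ident: "4 * l k * (l k - (B1 cm cp U1 k + B2 cm cp U2 k)) - (Dop cm cp W k)^2
              = h k + t * Ge k - t^2 * cc k"
          unfolding U1_def U2_def W_def B1_lin B2_lin Dop_lin
          by (simp add: h_def Ge_def G_def cc_def Bu_def Dw_def power2_eq_square algebra_simps)
        have "h k + t * Ge k - t^2 * cc k \<ge> 0"
        proof (cases "act k")
          case True
          have "t \<le> Ge k / (cc k + 1)" using tle[OF k] True by (simp add: \<delta>_def)
          then have "t * (cc k + 1) \<le> Ge k" using ccnn[of k]
            by (simp add: le_divide_eq add_nonneg_pos)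
          then have "t * cc k \<le> Ge k" using tpos by (simp add: distrib_left)
          then have "t * (t * cc k) \<le> t * Ge k" using tpos by (intro mult_left_mono) auto
          then show ?thesis using True by (simp add: act_def power2_eq_square algebra_simps)
        next
          case False
          have hk: "h k > 0" using hnn[OF k] False by (simp add: act_def)
          have "t \<le> h k / (\<bar>Ge k\<bar> + cc k + 1)" using tle[OF k] False by (simp add: \<delta>_def)
          then have t1': "t * (\<bar>Ge k\<bar> + cc k + 1) \<le> h k" using ccnn[of k]
            by (simp add: le_divide_eq add_nonneg_pos)
          have "t^2 * cc k \<le> t * cc k" using tle1 tpos ccnn[of k]
            by (simp add: power2_eq_square mult_right_mono)
          moreover have "t * (- \<bar>Ge k\<bar>) \<le> t * Ge k" using tpos
            by (intro mult_left_mono) auto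
          moreover have "t * (\<bar>Ge k\<bar> + cc k + 1) = t * \<bar>Ge k\<bar> + t * cc k + t"
            by (simp add: distrib_left)
          ultimately show ?thesis using t1' tpos by linarith
        qed
        then show "(Dop cm cp W k)^2 \<le> 4 * l k * (l k - (B1 cm cp U1 k + B2 cm cp U2 k))"
          using ident by simp
      qed
      have "loadwork N f W \<le> FW" by (rule dfeas[OF nU feasU])
      moreover have "loadwork N f W = FW + t * fe" unfolding W_def loadwork_lin by (simp add: FW_def fe_def)
      moreover have "t * fe > 0" using tpos fe by (simp add: mult_pos_pos)
      ultimately show ?thesis by linarith
    next
      assume "\<exists>y. (\<forall>i<m. 0 \<le> y i) \<and> (\<forall>x. \<phi> x = (\<Sum>i<m. y i * A i x))"
      then obtain y where y: "\<forall>i<m. 0 \<le> y i" "\<forall>x. \<phi> x = (\<Sum>i<m. y i * A i x)" by blast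
      define lam where "lam = (\<lambda>k. if act k then y k else 0)"
      have lamnn: "\<And>k. k<m \<Longrightarrow> lam k \<ge> 0" using y(1) by (simp add: lam_def)
      have lamh: "\<And>k. lam k * h k = 0" by (simp add: lam_def act_def)
      have KKTid: "loadwork N f d3 = (\<Sum>k<m. lam k * (4 * l k * (B1 cm cp d1 k + B2 cm cp d2 k) + 2 * Dw k * Dop cm cp d3 k))"
        if "nodevec N d1" "nodevec N d2" "nodevec N d3" for d1 d2 d3
      proof -
        have "- loadwork N f d3 = (\<Sum>i<m. y i * A i (d1, d2, d3))"
          using y(2) Pid[OF that(3)] by (simp add: \<phi>_def)
        also have "\<dots> = (\<Sum>k<m. lam k * G k d1 d2 d3)"
          by (rule sum.cong) (auto simp: A_def lam_def Pid[OF that(1)] Pid[OF that(2)] Pid[OF that(3)])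
        also have "\<dots> = - (\<Sum>k<m. lam k * (4 * l k * (B1 cm cp d1 k + B2 cm cp d2 k) + 2 * Dw k * Dop cm cp d3 k))"
          unfolding sum_negf[symmetric] by (rule sum.cong) (simp_all add: G_def algebra_simps)
        finally show ?thesis by simp
      qed
      define s0 where "s0 = (\<lambda>k. 4 * lam k * l k)"
      define q0 where "q0 = (\<lambda>k. 2 * lam k * Dw k)"
      define r0 where "r0 = (\<lambda>k. 2 * lam k * (l k - Bu k))"
      have zero_nv: "nodevec N (\<lambda>p. 0)" by (simp add: nodevec_def)
      have ind_nv: "x \<in> N \<Longrightarrow> nodevec N (\<lambda>p. of_bool (p = x))" for x by (auto simp: nodevec_def)
      have feas0: "P_feas m cm cp N f s0 q0 r0"
        unfolding P_feas_def
      proof (intro conjI allI impI ballI)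
        fix k assume k: "k < m"
        show "0 \<le> s0 k" using lamnn[OF k] lp[OF k] by (simp add: s0_def)
        show "0 \<le> r0 k" using lamnn[OF k] t2nn[OF k] by (simp add: r0_def)
        have "2 * r0 k * s0 k - (q0 k)^2 = 4 * (lam k)^2 * h k"
          by (simp add: r0_def s0_def q0_def h_def power2_eq_square algebra_simps)
        moreover have "4 * (lam k)^2 * h k \<ge> 0" using hnn[OF k] by simp
        ultimately have "(q0 k)^2 \<le> 2 * r0 k * s0 k" by linarith
        then show "inK (r0 k) (s0 k) (q0 k)"
          using \<open>0 \<le> s0 k\<close> \<open>0 \<le> r0 k\<close> by (simp add: inK_def)
      next
        fix x assume x: "x \<in> N"
        have "0 = (\<Sum>k<m. lam k * (4 * l k * (B1 cm cp (\<lambda>p. of_bool (p = x)) k + B2 cm cp (\<lambda>p. 0) k) + 2 * Dw k * Dop cm cp (\<lambda>p. 0) k))"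
          using KKTid[OF ind_nv[OF x] zero_nv zero_nv] by (simp add: loadwork_zero)
        also have "\<dots> = (\<Sum>k<m. s0 k * B1 cm cp (\<lambda>p. of_bool (p = x)) k)"
          by (rule sum.cong) (simp_all add: B2_zero Dop_zero s0_def algebra_simps)
        also have "\<dots> = B1T m cm cp s0 x" by (rule B1T_ind)
        finally show "B1T m cm cp s0 x = 0" by simp
        have "0 = (\<Sum>k<m. lam k * (4 * l k * (B1 cm cp (\<lambda>p. 0) k + B2 cm cp (\<lambda>p. of_bool (p = x)) k) + 2 * Dw k * Dop cm cp (\<lambda>p. 0) k))"
          using KKTid[OF zero_nv ind_nv[OF x] zero_nv] by (simp add: loadwork_zero)
        also have "\<dots> = (\<Sum>k<m. s0 k * B2 cm cp (\<lambda>p. of_bool (p = x)) k)"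
          by (rule sum.cong) (simp_all add: B1_zero Dop_zero s0_def algebra_simps)
        also have "\<dots> = B2T m cm cp s0 x" by (rule B2T_ind)
        finally show "B2T m cm cp s0 x = 0" by simp
        have "f x = (\<Sum>k<m. lam k * (4 * l k * (B1 cm cp (\<lambda>p. 0) k + B2 cm cp (\<lambda>p. 0) k) + 2 * Dw k * Dop cm cp (\<lambda>p. of_bool (p = x)) k))"
          using KKTid[OF zero_nv zero_nv ind_nv[OF x]] loadwork_ind[OF finN x] by simp
        also have "\<dots> = (\<Sum>k<m. q0 k * Dop cm cp (\<lambda>p. of_bool (p = x)) k)"
          by (rule sum.cong) (simp_all add: B1_zero B2_zero q0_def algebra_simps)
        also have "\<dots> = DT m cm cp q0 x" by (rule DT_ind)
        finally show "DT m cm cp q0 x = f x" by simp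
      qed
      have "FW = (\<Sum>k<m. lam k * (4 * l k * Bu k + 2 * Dw k * Dw k))"
        using KKTid[OF nu1 nu2 nw] by (simp add: FW_def Bu_def Dw_def)
      then have "P_obj m cm cp s0 r0 - FW = (\<Sum>k<m. (l k * s0 k + 2 * (l k * r0 k)) - lam k * (4 * l k * Bu k + 2 * Dw k * Dw k))"
        by (simp add: Pobj_split sum_subtractf)
      also have "\<dots> = (\<Sum>k<m. 2 * (lam k * h k))"
        by (rule sum.cong) (simp_all add: s0_def r0_def h_def power2_eq_square algebra_simps)
      also have "\<dots> = 0" using lamh by (intro sum.neutral) simp
      finally have "P_obj m cm cp s0 r0 = FW" by simp
      then show ?thesis using Psol2 feas0 by metis
    qed
  qed
  have "(\<Sum>k<m. T k) \<ge> 0" using Tnn by (intro sum_nonneg) auto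
  then have Pobj_eq: "P_obj m cm cp s r = FW" using kkt gap by linarith
  have T0: "\<And>k. k<m \<Longrightarrow> T k = 0"
  proof -
    have "(\<Sum>k<m. T k) = 0" using gap Pobj_eq by simp
    moreover have "\<forall>k\<in>{..<m}. 0 \<le> T k" using Tnn by auto
    ultimately have "\<forall>k\<in>{..<m}. T k = 0" using sum_nonneg_eq_0_iff[of "{..<m}" T] by auto
    then show "\<And>k. k<m \<Longrightarrow> T k = 0" by auto
  qed
  have ZX_eq: "ZX m cm cp N f = P_obj m cm cp s r"
    unfolding ZX_def
  proof (rule cInf_eq_minimum)
    show "P_obj m cm cp s r \<in> {P_obj m cm cp s r |s q r. P_feas m cm cp N f s q r}" using Psol1 by blast
  next
    fix x assume "x \<in> {P_obj m cm cp s r |s q r. P_feas m cm cp N f s q r}"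
    then show "P_obj m cm cp s r \<le> x" using Psol2 by blast
  qed
  have ZP: "Z = P_obj m cm cp s r" using ZX_eq Z_def by simp
  have ZF: "Z = FW" using ZP Pobj_eq by simp
  have Zp: "Z > 0" using Zpos Z_def by simp
  have cc: "\<And>k. k<m \<Longrightarrow> q k * (2 * l k) = s k * Dw k \<and> 8 * r k * (l k)^2 = s k * (Dw k)^2
                         \<and> (s k > 0 \<longrightarrow> (Dw k)^2 = 4 * l k * (l k - Bu k))"
  proof -
    fix k assume k: "k < m"
    have t1p: "t1 k > 0" using t1e[OF k] lp[OF k] by simp
    have T: "r k * t1 k + s k * t2 k + q k * t3 k = 0" using T0[OF k] by (simp add: T_def)
    note C = cone_comp[OF rK[OF k] tK[OF k] t1p T]
    have c1: "q k * (2 * l k) = s k * Dw k" using C(1) t1e[OF k] t3e[OF k] by simp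
    have c2: "8 * r k * (l k)^2 = s k * (Dw k)^2" using C(2) t1e[OF k] t3e[OF k]
      by (simp add: power2_eq_square algebra_simps)
    have c3: "s k > 0 \<longrightarrow> (Dw k)^2 = 4 * l k * (l k - Bu k)" using C(3) t1e[OF k] t2e[OF k] t3e[OF k]
      by simp
    show "q k * (2 * l k) = s k * Dw k \<and> 8 * r k * (l k)^2 = s k * (Dw k)^2
          \<and> (s k > 0 \<longrightarrow> (Dw k)^2 = 4 * l k * (l k - Bu k))" using c1 c2 c3 by blast
  qed
  have DZ: "\<And>k. Delta cm cp z k = Dw k / 2 / l k"
    by (simp add: Delta_def Dop_def z_def Dw_def l_def diff_divide_distrib)
  define J where "J = Jd cm cp z"
  have Jpos: "\<And>k. J k > 0" by (simp add: J_def Jd_def add_pos_nonneg)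
  have Jsq: "\<And>k. (J k)^2 = 1 + (Delta cm cp z k)^2" by (simp add: J_def Jd_def add_nonneg_nonneg)
  have lhatJ: "\<And>k. lhat cm cp z k = J k * l k" by (simp add: lhat_def J_def l_def)
  have K1: "\<And>k. k<m \<Longrightarrow> q k = Delta cm cp z k * s k"
  proof -
    fix k assume k: "k<m"
    have "q k * (2 * l k) = s k * Dw k" using cc[OF k] by blast
    then show "q k = Delta cm cp z k * s k" using lp[OF k] unfolding DZ by (simp add: field_simps)
  qed
  define \<mu> where "\<mu> = (\<lambda>k. l k * (J k)^2 * s k)"
  have \<mu>nn: "\<And>k. k<m \<Longrightarrow> \<mu> k \<ge> 0"
  proof -
    fix k assume k: "k < m"
    have "0 \<le> l k * (J k)^2" using lp[OF k] by simp
    then show "\<mu> k \<ge> 0" unfolding \<mu>_def using sge[OF k] by (rule mult_nonneg_nonneg)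
  qed
  have K2: "\<And>k. k<m \<Longrightarrow> \<mu> k = l k * s k + 2 * (l k * r k)"
  proof -
    fix k assume k: "k<m"
    have e: "8 * r k * (l k)^2 = s k * (Dw k)^2" using cc[OF k] by blast
    have "\<mu> k = l k * s k + s k * (Dw k)^2 / (4 * l k)" unfolding \<mu>_def Jsq DZ using lp[OF k]
      by (simp add: field_simps power2_eq_square)
    also have "s k * (Dw k)^2 / (4 * l k) = 2 * (l k * r k)" unfolding e[symmetric] using lp[OF k]
      by (simp add: field_simps power2_eq_square)
    finally show "\<mu> k = l k * s k + 2 * (l k * r k)" .
  qed
  have sum\<mu>: "(\<Sum>k<m. \<mu> k) = Z" using K2 ZP Pobj_split[of s r] by simp
  have str1: "\<And>k. k<m \<Longrightarrow> s k > 0 \<Longrightarrow> strainhat cm cp u1 u2 w z k = 1"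
  proof -
    fix k assume k: "k<m" and sk: "s k > 0"
    have "(Dw k)^2 = 4 * l k * (l k - Bu k)" using cc[OF k] sk by blast
    from strain_eq1[OF lp[OF k] this]
    show "strainhat cm cp u1 u2 w z k = 1"
      unfolding strainhat_def strain_def DZ by (simp add: Delta_def Bu_def Dw_def l_def)
  qed
  have strle: "\<And>k z'. k<m \<Longrightarrow> strainhat cm cp u1 u2 w z' k \<le> 1"
  proof -
    fix k z' assume k: "k<m"
    have "(Dw k)^2 \<le> 4 * l k * (l k - Bu k)" using hnn[OF k] by (simp add: h_def)
    from strain_le1[OF lp[OF k] this, of "Delta cm cp z' k"]
    show "strainhat cm cp u1 u2 w z' k \<le> 1"
      unfolding strainhat_def strain_def by (simp add: Delta_def Bu_def Dw_def l_def)
  qed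
  define c where "c = Z / (E0 * V0)"
  have cpos: "c > 0" using Zp E0 V0 by (simp add: c_def)
  have a_eq: "\<And>k. a k = V0 / Z * (J k * s k)" by (simp add: a_def J_def)
  have ann: "\<And>k. k<m \<Longrightarrow> a k \<ge> 0"
  proof -
    fix k assume k: "k < m"
    have "0 \<le> J k * s k" using Jpos[of k] sge[OF k] by simp
    then show "a k \<ge> 0" unfolding a_eq using Zp V0 by simp
  qed
  have a0: "\<And>k. a k = 0 \<longleftrightarrow> s k = 0"
  proof -
    fix k have "J k \<noteq> 0" using Jpos[of k] by simp
    then show "a k = 0 \<longleftrightarrow> s k = 0" using Zp V0 by (simp add: a_eq)
  qed
  have alhat: "\<And>k. a k * lhat cm cp z k = V0 / Z * \<mu> k"
    by (simp add: a_eq lhatJ \<mu>_def power2_eq_square)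
  have asum: "(\<Sum>k<m. a k * lhat cm cp z k) = V0"
  proof -
    have "(\<Sum>k<m. a k * lhat cm cp z k) = (\<Sum>k<m. V0 / Z * \<mu> k)" by (simp only: alhat)
    also have "\<dots> = V0 / Z * Z" by (simp only: sum_distrib_left[symmetric] sum\<mu>)
    finally show ?thesis using Zp by simp
  qed
  have nz: "nodevec N z" using nw by (simp add: nodevec_def z_def)
  have MF: "MCGS_feas m cm cp N V0 z a" using nz ann asum by (simp add: MCGS_feas_def)
  define Vs where "Vs = Z^2 / (2 * E0 * V0)"
  have cZ: "c * Z / 2 = Vs" by (simp add: c_def Vs_def power2_eq_square)
  have Ident: "disp_obj m cm cp N f E0 z a U1 U2 W =
      (\<Sum>k<m. \<mu> k * (strainhat cm cp U1 U2 W z k - (max 0 (strainhat cm cp U1 U2 W z k))^2 / (2 * c)))"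
    if nU: "nodevec N U1" "nodevec N U2" "nodevec N W" for U1 U2 W
  proof -
    define sh' where "sh' = (\<lambda>k. strainhat cm cp U1 U2 W z k)"
    have "loadwork N f W = (\<Sum>k<m. q k * Dop cm cp W k) + (\<Sum>k<m. s k * (B1 cm cp U1 k + B2 cm cp U2 k))"
      using FWgen[OF nU(3)] sBgen[OF nU(1,2)] by simp
    also have "\<dots> = (\<Sum>k<m. \<mu> k * sh' k)"
      unfolding sum.distrib[symmetric]
    proof (rule sum.cong)
      fix k assume "k \<in> {..<m}"
      then have k: "k < m" by simp
      have d: "1 + (Delta cm cp z k)^2 > 0" by (simp add: add_pos_nonneg)
      have "\<mu> k * sh' k = s k * ((B1 cm cp U1 k + B2 cm cp U2 k) + Delta cm cp z k * Dop cm cp W k)"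
        unfolding sh'_def strainhat_def strain_def \<mu>_def Jsq Delta_def[of cm cp W] l_def[symmetric]
        using alg1[OF lp[OF k] d] by simp
      then show "q k * Dop cm cp W k + s k * (B1 cm cp U1 k + B2 cm cp U2 k) = \<mu> k * sh' k"
        unfolding K1[OF k] by (simp add: algebra_simps)
    qed simp
    finally have lw: "loadwork N f W = (\<Sum>k<m. \<mu> k * sh' k)" .
    have pen: "E0 / 2 * (\<Sum>k<m. (max 0 (sh' k))^2 * a k * lhat cm cp z k)
             = (\<Sum>k<m. \<mu> k * ((max 0 (sh' k))^2 / (2 * c)))"
      unfolding sum_distrib_left
    proof (rule sum.cong)
      fix k assume "k \<in> {..<m}"
      have "(max 0 (sh' k))^2 * a k * lhat cm cp z k = (max 0 (sh' k))^2 * (a k * lhat cm cp z k)" by simp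
      then show "E0 / 2 * ((max 0 (sh' k))^2 * a k * lhat cm cp z k) = \<mu> k * ((max 0 (sh' k))^2 / (2 * c))"
        unfolding alhat c_def using E0 V0 Zp by (simp add: field_simps)
    qed simp
    show ?thesis unfolding disp_obj_def lw
      using pen by (simp add: sh'_def sum_subtractf right_diff_distrib)
  qed
  have UB: "disp_obj m cm cp N f E0 z a U1 U2 W \<le> Vs"
    if nU: "nodevec N U1" "nodevec N U2" "nodevec N W" for U1 U2 W
  proof -
    have "disp_obj m cm cp N f E0 z a U1 U2 W \<le> (\<Sum>k<m. \<mu> k * (c / 2))"
      unfolding Ident[OF nU] by (intro sum_mono mult_left_mono pen_le cpos \<mu>nn) auto
    also have "\<dots> = (\<Sum>k<m. \<mu> k) * (c / 2)" by (simp only: sum_distrib_right[symmetric])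
    also have "\<dots> = Vs" using sum\<mu> cZ by (simp add: mult.commute)
    finally show ?thesis .
  qed
  have nel: "nodevec N u1el" "nodevec N u2el" "nodevec N wel"
    using nu1 nu2 nw by (auto simp: nodevec_def u1el_def u2el_def wel_def)
  have stel: "\<And>k. strainhat cm cp u1el u2el wel z k = c * strainhat cm cp u1 u2 w z k"
    unfolding u1el_def u2el_def wel_def c_def by (rule strainhat_scale)
  have Att: "disp_obj m cm cp N f E0 z a u1el u2el wel = Vs"
  proof -
    have "disp_obj m cm cp N f E0 z a u1el u2el wel = (\<Sum>k<m. \<mu> k * (c / 2))"
      unfolding Ident[OF nel]
    proof (rule sum.cong)
      fix k assume "k \<in> {..<m}"
      then have k: "k < m" by simp
      show "\<mu> k * (strainhat cm cp u1el u2el wel z k - (max 0 (strainhat cm cp u1el u2el wel z k))^2 / (2 * c)) = \<mu> k * (c / 2)"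
      proof (cases "s k = 0")
        case True then show ?thesis by (simp add: \<mu>_def)
      next
        case False
        then have "s k > 0" using sge[OF k] by simp
        then show ?thesis using str1[OF k] cpos unfolding stel
          by (simp add: power2_eq_square max_def)
      qed
    qed simp
    also have "\<dots> = (\<Sum>k<m. \<mu> k) * (c / 2)" by (simp only: sum_distrib_right[symmetric])
    also have "\<dots> = Vs" using sum\<mu> cZ by (simp add: mult.commute)
    finally show ?thesis .
  qed
  have comp_za: "compliance m cm cp N f E0 z a = ereal Vs"
    unfolding compliance_def
  proof (rule antisym)
    show "(SUP uw\<in>{(u1, u2, w). nodevec N u1 \<and> nodevec N u2 \<and> nodevec N w}.
           ereal (case uw of (u1, u2, w) \<Rightarrow> disp_obj m cm cp N f E0 z a u1 u2 w)) \<le> ereal Vs"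
      using UB by (intro SUP_least) auto
    show "ereal Vs \<le> (SUP uw\<in>{(u1, u2, w). nodevec N u1 \<and> nodevec N u2 \<and> nodevec N w}.
           ereal (case uw of (u1, u2, w) \<Rightarrow> disp_obj m cm cp N f E0 z a u1 u2 w))"
      using Att nel by (intro SUP_upper2[of "(u1el, u2el, wel)"]) auto
  qed
  have LB: "ereal Vs \<le> compliance m cm cp N f E0 z' a'" if F: "MCGS_feas m cm cp N V0 z' a'" for z' a'
  proof -
    have a'nn: "\<And>k. k<m \<Longrightarrow> a' k \<ge> 0" and a'sum: "(\<Sum>k<m. a' k * lhat cm cp z' k) \<le> V0"
      using F by (auto simp: MCGS_feas_def)
    have lh'nn: "\<And>k. k<m \<Longrightarrow> lhat cm cp z' k \<ge> 0"
    proof -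
      fix k assume k: "k < m"
      have "0 \<le> Jd cm cp z' k" by (simp add: Jd_def)
      moreover have "0 \<le> barlen cm cp k" using lp[OF k] by (simp add: l_def)
      ultimately show "lhat cm cp z' k \<ge> 0" unfolding lhat_def by simp
    qed
    have lw: "loadwork N f wel = c * Z" unfolding wel_def loadwork_scale using ZF by (simp add: c_def FW_def)
    have "(\<Sum>k<m. (max 0 (strainhat cm cp u1el u2el wel z' k))^2 * a' k * lhat cm cp z' k)
          \<le> (\<Sum>k<m. c^2 * (a' k * lhat cm cp z' k))"
    proof (rule sum_mono)
      fix k assume "k \<in> {..<m}"
      then have k: "k < m" by simp
      have st: "strainhat cm cp u1el u2el wel z' k = c * strainhat cm cp u1 u2 w z' k"
        unfolding u1el_def u2el_def wel_def c_def by (rule strainhat_scale)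
      have "c * strainhat cm cp u1 u2 w z' k \<le> c" using strle[OF k] cpos
        by (simp add: mult_left_le)
      then have "max 0 (c * strainhat cm cp u1 u2 w z' k) \<le> c" using cpos by simp
      then have "(max 0 (c * strainhat cm cp u1 u2 w z' k))^2 \<le> c^2" by (intro power_mono) auto
      moreover have "a' k * lhat cm cp z' k \<ge> 0" using a'nn[OF k] lh'nn[OF k] by simp
      ultimately show "(max 0 (strainhat cm cp u1el u2el wel z' k))^2 * a' k * lhat cm cp z' k
          \<le> c^2 * (a' k * lhat cm cp z' k)" unfolding st
        by (metis mult.assoc mult_right_mono)
    qed
    also have "\<dots> \<le> c^2 * V0" using a'sum by (simp add: sum_distrib_left[symmetric] mult_left_mono)
    finally have pen: "(\<Sum>k<m. (max 0 (strainhat cm cp u1el u2el wel z' k))^2 * a' k * lhat cm cp z' k) \<le> c^2 * V0" .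
    have "Vs = c * Z - E0 / 2 * (c^2 * V0)" using E0 V0 by (simp add: Vs_def c_def field_simps power2_eq_square)
    also have "\<dots> \<le> disp_obj m cm cp N f E0 z' a' u1el u2el wel"
      unfolding disp_obj_def lw using pen E0 by simp
    finally have "Vs \<le> disp_obj m cm cp N f E0 z' a' u1el u2el wel" .
    then show ?thesis unfolding compliance_def
      using nel by (intro SUP_upper2[of "(u1el, u2el, wel)"]) auto
  qed
  have Cmin_eq: "Cmin m cm cp N f E0 V0 = ereal Vs"
    unfolding Cmin_def
  proof (rule antisym)
    show "(INF za\<in>{(z, a). MCGS_feas m cm cp N V0 z a}. compliance m cm cp N f E0 (fst za) (snd za)) \<le> ereal Vs"
      using MF comp_za by (intro INF_lower2[of "(z, a)"]) auto
    show "ereal Vs \<le> (INF za\<in>{(z, a). MCGS_feas m cm cp N V0 z a}. compliance m cm cp N f E0 (fst za) (snd za))"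
      using LB by (intro INF_greatest) auto
  qed
  have copt: "\<forall>z' a'. MCGS_feas m cm cp N V0 z' a' \<longrightarrow>
          compliance m cm cp N f E0 z a \<le> compliance m cm cp N f E0 z' a'"
    using LB comp_za by simp
  have dopt_el: "\<forall>u1' u2' w'. nodevec N u1' \<and> nodevec N u2' \<and> nodevec N w' \<longrightarrow>
          disp_obj m cm cp N f E0 z a u1' u2' w' \<le> disp_obj m cm cp N f E0 z a u1el u2el wel"
    using UB Att by simp
  have strain_c: "\<forall>k<m. a k \<noteq> 0 \<longrightarrow> strainhat cm cp u1el u2el wel z k = Z / (E0 * V0)"
  proof (intro allI impI)
    fix k assume k: "k < m" and "a k \<noteq> 0"
    then have "s k > 0" using a0 sge[OF k] by (simp add: less_le)
    then show "strainhat cm cp u1el u2el wel z k = Z / (E0 * V0)" using str1[OF k] stel c_def by simp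
  qed
  have hooke: "\<forall>k<m. sh k = E0 * a k * strainhat cm cp u1el u2el wel z k"
  proof (intro allI impI)
    fix k assume k: "k < m"
    show "sh k = E0 * a k * strainhat cm cp u1el u2el wel z k"
    proof (cases "s k = 0")
      case True then show ?thesis by (simp add: sh_def a_eq)
    next
      case False
      then have "s k > 0" using sge[OF k] by simp
      then show ?thesis unfolding stel str1[OF k \<open>s k > 0\<close>] sh_def a_eq c_def J_def
        using E0 V0 Zp by (simp add: field_simps)
    qed
  qed
  have shJ: "\<And>k. sh k / Jd cm cp z k = s k"
  proof -
    fix k have "Jd cm cp z k \<noteq> 0" using Jpos[of k] by (simp add: J_def)
    then show "sh k / Jd cm cp z k = s k" by (simp add: sh_def)
  qed
  have qJ: "\<And>x. DT m cm cp (\<lambda>k. Delta cm cp z k * sh k / Jd cm cp z k) x = DT m cm cp q x"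
    unfolding DT_def by (rule sum.cong) (simp_all add: K1 times_divide_eq_right[symmetric] shJ del: times_divide_eq_right)
  have sfeas: "stress_feas m cm cp N f z sh"
    unfolding stress_feas_def Let_def
  proof (intro conjI allI impI ballI)
    fix k assume k: "k < m"
    show "0 \<le> sh k" using Jpos[of k] sge[OF k] by (simp add: sh_def J_def)
  next
    fix x assume x: "x \<in> N"
    have e: "(\<lambda>k. sh k / Jd cm cp z k) = s" using shJ by (simp add: fun_eq_iff)
    show "B1T m cm cp (\<lambda>k. sh k / Jd cm cp z k) x = 0" unfolding e using eqN[OF x] by simp
    show "B2T m cm cp (\<lambda>k. sh k / Jd cm cp z k) x = 0" unfolding e using eqN[OF x] by simp
    show "DT m cm cp (\<lambda>k. Delta cm cp z k * sh k / Jd cm cp z k) x = f x" unfolding qJ using eqN[OF x] by simp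
  qed
  have lhpos: "\<And>k. k<m \<Longrightarrow> lhat cm cp z k > 0" using Jpos lp by (simp add: lhatJ)
  define \<tau> where "\<tau> = Z / V0"
  have \<tau>pos: "\<tau> > 0" using Zp V0 by (simp add: \<tau>_def)
  have so_sh: "stress_obj m cm cp E0 z a sh = ereal Vs"
  proof -
    have "(\<Sum>k<m. qdiv ((sh k)^2) (a k) * ereal (lhat cm cp z k)) = (\<Sum>k<m. ereal (\<tau> * \<mu> k))"
    proof (rule sum.cong)
      fix k assume "k \<in> {..<m}"
      then have k: "k < m" by simp
      show "qdiv ((sh k)^2) (a k) * ereal (lhat cm cp z k) = ereal (\<tau> * \<mu> k)"
      proof (cases "s k = 0")
        case True then show ?thesis using a0[of k] by (simp add: sh_def qdiv_def \<mu>_def)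
      next
        case False
        then have ak: "a k \<noteq> 0" using a0 by simp
        have "(sh k)^2 / a k * lhat cm cp z k = \<tau> * \<mu> k"
          unfolding sh_def a_eq lhatJ \<mu>_def \<tau>_def J_def[symmetric]
          using False Jpos[of k] Zp V0 by (simp add: field_simps power2_eq_square)
        then show ?thesis using ak by (simp add: qdiv_def)
      qed
    qed simp
    also have "\<dots> = ereal (\<tau> * Z)" by (simp add: sum_distrib_left[symmetric] sum\<mu>)
    finally show ?thesis unfolding stress_obj_def using E0 V0
      by (simp add: Vs_def \<tau>_def power2_eq_square)
  qed
  have sopt: "\<forall>sh'. stress_feas m cm cp N f z sh' \<longrightarrow>
          stress_obj m cm cp E0 z a sh \<le> stress_obj m cm cp E0 z a sh'"
  proof (intro allI impI)
    fix sh' assume SF: "stress_feas m cm cp N f z sh'"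
    have sh'nn: "\<And>k. k<m \<Longrightarrow> sh' k \<ge> 0" using SF by (simp add: stress_feas_def)
    define s' where "s' = (\<lambda>k. sh' k / Jd cm cp z k)"
    define q' where "q' = (\<lambda>k. Delta cm cp z k * sh' k / Jd cm cp z k)"
    define r' where "r' = (\<lambda>k. (Delta cm cp z k)^2 * sh' k / (2 * Jd cm cp z k))"
    have F': "P_feas m cm cp N f s' q' r'"
      unfolding P_feas_def
    proof (intro conjI allI impI ballI)
      fix k assume k: "k < m"
      have J: "Jd cm cp z k > 0" using Jpos[of k] by (simp add: J_def)
      show "0 \<le> s' k" using sh'nn[OF k] J by (simp add: s'_def)
      show "0 \<le> r' k" using sh'nn[OF k] J by (simp add: r'_def)
      have "2 * r' k * s' k = (q' k)^2" using J
        by (simp add: r'_def s'_def q'_def field_simps power2_eq_square)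
      then show "inK (r' k) (s' k) (q' k)" using \<open>0 \<le> s' k\<close> \<open>0 \<le> r' k\<close> by (simp add: inK_def)
    next
      fix x assume x: "x \<in> N"
      show "B1T m cm cp s' x = 0" "B2T m cm cp s' x = 0" "DT m cm cp q' x = f x"
        using SF x by (simp_all add: stress_feas_def Let_def s'_def q'_def)
    qed
    have Zle: "Z \<le> (\<Sum>k<m. sh' k * lhat cm cp z k)"
    proof -
      have "P_obj m cm cp s' r' = (\<Sum>k<m. sh' k * lhat cm cp z k)"
        unfolding Pobj_split
      proof (rule sum.cong)
        fix k assume "k \<in> {..<m}"
        have J: "J k > 0" using Jpos[of k] .
        have "l k * s' k + 2 * (l k * r' k) = l k * sh' k * (1 + (Delta cm cp z k)^2) / J k"
          unfolding s'_def r'_def J_def[symmetric] using J by (simp add: field_simps)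
        also have "\<dots> = l k * sh' k * (J k)^2 / J k" by (simp only: Jsq)
        also have "\<dots> = sh' k * lhat cm cp z k" unfolding lhatJ using J by (simp add: power2_eq_square)
        finally show "l k * s' k + 2 * (l k * r' k) = sh' k * lhat cm cp z k" .
      qed simp
      then show ?thesis using Psol2 F' ZP by metis
    qed
    show "stress_obj m cm cp E0 z a sh \<le> stress_obj m cm cp E0 z a sh'"
    proof (cases "\<exists>k<m. a k = 0 \<and> sh' k \<noteq> 0")
      case True
      then obtain k0 where k0: "k0 < m" "a k0 = 0" "sh' k0 \<noteq> 0" by blast
      have tnn: "0 \<le> qdiv ((sh' k)^2) (a k) * ereal (lhat cm cp z k)" if "k < m" for k
      proof -
        have "0 \<le> qdiv ((sh' k)^2) (a k)" using ann[OF that] by (auto simp: qdiv_def)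
        moreover have "0 \<le> ereal (lhat cm cp z k)" using lhpos[OF that] by simp
        ultimately show ?thesis by simp
      qed
      have "qdiv ((sh' k0)^2) (a k0) * ereal (lhat cm cp z k0) = \<infinity>"
        using k0 lhpos[OF k0(1)] by (simp add: qdiv_def)
      moreover have "(\<Sum>k<m. qdiv ((sh' k)^2) (a k) * ereal (lhat cm cp z k))
          = qdiv ((sh' k0)^2) (a k0) * ereal (lhat cm cp z k0) + (\<Sum>k\<in>{..<m}-{k0}. qdiv ((sh' k)^2) (a k) * ereal (lhat cm cp z k))"
        using k0(1) by (intro sum.remove) auto
      moreover have "0 \<le> (\<Sum>k\<in>{..<m}-{k0}. qdiv ((sh' k)^2) (a k) * ereal (lhat cm cp z k))"
        using tnn by (intro sum_nonneg) auto
      ultimately have "(\<Sum>k<m. qdiv ((sh' k)^2) (a k) * ereal (lhat cm cp z k)) = \<infinity>" by simp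
      then have "stress_obj m cm cp E0 z a sh' = \<infinity>" using E0 by (simp add: stress_obj_def)
      then show ?thesis by simp
    next
      case False
      define g where "g = (\<lambda>k. if a k = 0 then 0 else (sh' k)^2 / a k * lhat cm cp z k)"
      have terms: "(\<Sum>k<m. qdiv ((sh' k)^2) (a k) * ereal (lhat cm cp z k)) = ereal (\<Sum>k<m. g k)"
      proof -
        have "(\<Sum>k<m. qdiv ((sh' k)^2) (a k) * ereal (lhat cm cp z k)) = (\<Sum>k<m. ereal (g k))"
          using False by (intro sum.cong) (auto simp: qdiv_def g_def)
        then show ?thesis by simp
      qed
      have gl: "g k \<ge> 2 * \<tau> * (sh' k * lhat cm cp z k) - \<tau>^2 * (a k * lhat cm cp z k)" if k: "k < m" for k
      proof (cases "a k = 0")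
        case True then show ?thesis using False k by (simp add: g_def)
      next
        case ak: False
        then have apos: "a k > 0" using ann[OF k] by simp
        have "2 * \<tau> * sh' k - \<tau>^2 * a k \<le> (sh' k)^2 / a k"
        proof -
          have "0 \<le> (sh' k - \<tau> * a k)^2" by simp
          then have "(2 * \<tau> * sh' k - \<tau>^2 * a k) * a k \<le> (sh' k)^2"
            by (simp add: power2_eq_square algebra_simps)
          then show ?thesis using apos by (simp add: le_divide_eq)
        qed
        then have "(2 * \<tau> * sh' k - \<tau>^2 * a k) * lhat cm cp z k \<le> (sh' k)^2 / a k * lhat cm cp z k"
          using lhpos[OF k] by (intro mult_right_mono) auto
        then show ?thesis using ak by (simp add: g_def algebra_simps)
      qed
      have "(\<Sum>k<m. 2 * \<tau> * (sh' k * lhat cm cp z k) - \<tau>^2 * (a k * lhat cm cp z k)) \<le> (\<Sum>k<m. g k)"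
        using gl by (intro sum_mono) auto
      moreover have "(\<Sum>k<m. 2 * \<tau> * (sh' k * lhat cm cp z k) - \<tau>^2 * (a k * lhat cm cp z k))
          = 2 * \<tau> * (\<Sum>k<m. sh' k * lhat cm cp z k) - \<tau>^2 * V0"
        by (simp add: sum_subtractf sum_distrib_left[symmetric] asum)
      moreover have "2 * \<tau> * Z \<le> 2 * \<tau> * (\<Sum>k<m. sh' k * lhat cm cp z k)"
        using Zle \<tau>pos by simp
      moreover have "2 * \<tau> * Z - \<tau>^2 * V0 = Z^2 / V0" using V0 by (simp add: \<tau>_def field_simps power2_eq_square)
      ultimately have gsum: "Z^2 / V0 \<le> (\<Sum>k<m. g k)" by linarith
      have "Vs = 1 / (2 * E0) * (Z^2 / V0)" by (simp add: Vs_def)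
      also have "\<dots> \<le> 1 / (2 * E0) * (\<Sum>k<m. g k)" using gsum E0 by (intro mult_left_mono) auto
      finally have "Vs \<le> 1 / (2 * E0) * (\<Sum>k<m. g k)" .
      moreover have "stress_obj m cm cp E0 z a sh' = ereal (1 / (2 * E0) * (\<Sum>k<m. g k))"
        unfolding stress_obj_def terms by simp
      ultimately show ?thesis using so_sh by simp
    qed
  qed
  show ?thesis
    using MF copt Cmin_eq nel dopt_el sfeas sopt strain_c hooke by (simp add: Vs_def)
qed

theorem theorem6p3:
  fixes \<Omega> :: "(real^2) set" and X :: "(real^2) set"
    and f :: "real^2 \<Rightarrow> real" and E0 V0 :: real
    and m :: nat and cm cp :: "nat \<Rightarrow> real^2"
    and s q r :: "nat \<Rightarrow> real" and u1 u2 w :: "real^2 \<Rightarrow> real"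
  assumes domain: "open \<Omega>" "connected \<Omega>" "\<Omega> \<noteq> {}" "bounded \<Omega>"
    and X_fin: "finite X" and X_sub: "X \<subseteq> closure \<Omega>"
    and X_int: "X - frontier \<Omega> \<subseteq> interior (convex hull (X \<inter> frontier \<Omega>))"
    and m_def: "m = card X * (card X - 1) div 2"
    and bars: "bij_betw (\<lambda>k. {cm k, cp k}) {..<m} {{x, y} | x y. x \<in> X \<and> y \<in> X \<and> x \<noteq> y}"
    and E0: "E0 > 0" and V0: "V0 > 0"
    and Zpos: "ZX m cm cp (X - frontier \<Omega>) f > 0"
    and Psol: "P_feas m cm cp (X - frontier \<Omega>) f s q r"
              "\<forall>s' q' r'. P_feas m cm cp (X - frontier \<Omega>) f s' q' r' \<longrightarrow>
                  P_obj m cm cp s r \<le> P_obj m cm cp s' r'"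
    and Pdsol: "\<exists>t1 t2 t3. Pd_feas m cm cp (X - frontier \<Omega>) u1 u2 w t1 t2 t3 \<and>
                 (\<forall>u1' u2' w' t1' t2' t3'. Pd_feas m cm cp (X - frontier \<Omega>) u1' u2' w' t1' t2' t3' \<longrightarrow>
                    loadwork (X - frontier \<Omega>) f w' \<le> loadwork (X - frontier \<Omega>) f w)"
  shows
    "let N = X - frontier \<Omega>;
         Z = ZX m cm cp N f;
         z = (\<lambda>x. w x / 2);
         a = (\<lambda>k. V0 / Z * (Jd cm cp z k * s k));
         u1el = (\<lambda>x. Z / (E0 * V0) * u1 x);
         u2el = (\<lambda>x. Z / (E0 * V0) * u2 x);
         wel = (\<lambda>x. Z / (E0 * V0) * w x);
         sh = (\<lambda>k. Jd cm cp z k * s k)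
     in
       \<comment> \<open>(z, a) solves (MCGS_X), with the stated optimal value\<close>
       MCGS_feas m cm cp N V0 z a \<and>
       (\<forall>z' a'. MCGS_feas m cm cp N V0 z' a' \<longrightarrow>
          compliance m cm cp N f E0 z a \<le> compliance m cm cp N f E0 z' a') \<and>
       Cmin m cm cp N f E0 V0 = ereal (Z ^ 2 / (2 * E0 * V0)) \<and>
       \<comment> \<open>the scaled displacements solve the displacement-based problem\<close>
       nodevec N u1el \<and> nodevec N u2el \<and> nodevec N wel \<and>
       (\<forall>u1' u2' w'. nodevec N u1' \<and> nodevec N u2' \<and> nodevec N w' \<longrightarrow>
          disp_obj m cm cp N f E0 z a u1' u2' w' \<le> disp_obj m cm cp N f E0 z a u1el u2el wel) \<and>
       \<comment> \<open>sh solves the stress-based problem\<close>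
       stress_feas m cm cp N f z sh \<and>
       (\<forall>sh'. stress_feas m cm cp N f z sh' \<longrightarrow>
          stress_obj m cm cp E0 z a sh \<le> stress_obj m cm cp E0 z a sh') \<and>
       \<comment> \<open>constant strain in active bars, and Hooke's law\<close>
       (\<forall>k<m. a k \<noteq> 0 \<longrightarrow> strainhat cm cp u1el u2el wel z k = Z / (E0 * V0)) \<and>
       (\<forall>k<m. sh k = E0 * a k * strainhat cm cp u1el u2el wel z k)"
proof -
  have finN: "finite (X - frontier \<Omega>)" using X_fin by simp
  have lpos: "\<forall>k<m. barlen cm cp k > 0"
  proof (intro allI impI)
    fix k assume "k < m"
    then have "{cm k, cp k} \<in> {{x, y} | x y. x \<in> X \<and> y \<in> X \<and> x \<noteq> y}"
      using bars by (auto dest: bij_betwE)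
    then have "cm k \<noteq> cp k" by (auto simp: doubleton_eq_iff)
    then show "barlen cm cp k > 0" by (simp add: barlen_def)
  qed
  show ?thesis unfolding Let_def
    by (rule core[OF finN lpos E0 V0 Zpos Psol(1) Psol(2) Pdsol refl refl refl refl refl refl refl])
qed

end
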